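(* Let $q,N_x,N_T,m\ge 1$ be integers and let $\Phi,\Phi_c\in\mathbb{C}^{qN_x\times qN_x}$. Assume there is a unitary matrix $F\in\mathbb{C}^{qN_x\times qN_x}$ such that $F^{-1}\Phi F=\mathrm{diag}(\widetilde\Phi_1,\dots,\widetilde\Phi_{N_x})$ and $F^{-1}\Phi_c F=\mathrm{diag}(\widetilde\Phi_{c,1},\dots,\widetilde\Phi_{c,N_x})$ are block diagonal with blocks $\widetilde\Phi_n,\widetilde\Phi_{c,n}\in\mathbb{C}^{q\times q}$. Assume further that for every $n=1,\dots,N_x$ there is an invertible $U_n\in\mathbb{C}^{q\times q}$ with $U_n^{-1}\widetilde\Phi_nU_n=\mathrm{diag}(\lambda_{n,1},\dots,\lambda_{n,q})$ and $U_n^{-1}\widetilde\Phi_{c,n}U_n=\mathrm{diag}(\mu_{n,1},\dots,\mu_{n,q})$, and that $|\mu_{n,l}|\neq 1$ for all $n,l$. Then the coarse-grid iteration matrices $E_\Delta^F=I-A_c^{-1}A_S$ and $E_\Delta^{FCF}=(I-A_c^{-1}A_S)(I-A_S)$ satisfy $$\|E_\Delta^F\|_2\le \max_{1\le n\le N_x}\Big\{\kappa(U_n)\max_{1\le l\le q}\Big\{|\lambda_{n,l}^m-\mu_{n,l}|\,\frac{1-|\mu_{n,l}|^{N_T}}{1-|\mu_{n,l}|}\Big\}\Big\}$$ and $$\|E_\Delta^{FCF}\|_2\le \max_{1\le n\le N_x}\Big\{\kappa(U_n)\max_{1\le l\le q}\Big\{|\lambda_{n,l}^m-\mu_{n,l}|\,|\lambda_{n,l}|^m\,\frac{1-|\mu_{n,l}|^{N_T-1}}{1-|\mu_{n,l}|}\Big\}\Big\},$$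 where $\kappa(U_n)=\|U_n\|_2\|U_n^{-1}\|_2$.
   Context: For a square matrix $G$, write $\mathcal{B}_{N_T}(G)$ for the $(N_T+1)\times(N_T+1)$ block matrix (block rows/columns indexed $0,\dots,N_T$) with identity blocks on the diagonal, $-G$ on the first block subdiagonal, and zero elsewhere. The coarse-grid operator is $A_c=\mathcal{B}_{N_T}(\Phi_c)$ and the Schur-complement coarse-grid operator is $A_S=\mathcal{B}_{N_T}(\Phi^m)$; $I$ denotes the identity of the same size. $\|\cdot\|_2$ is the spectral norm. *)

theory Defs
  imports Complex_Main "Jordan_Normal_Form.Matrix"
begin

definition vnorm2 :: "complex vec \<Rightarrow> real" where
  "vnorm2 v = sqrt (\<Sum>i<dim_vec v. (cmod (v $ i))^2)"

definition spec_norm :: "complex mat \<Rightarrow> real" where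
  "spec_norm A = Sup {vnorm2 (A *\<^sub>v v) | v. v \<in> carrier_vec (dim_col A) \<and> vnorm2 v \<le> 1}"

definition adj :: "complex mat \<Rightarrow> complex mat" where
  "adj A = mat (dim_col A) (dim_row A) (\<lambda>(i,j). cnj (A $$ (j,i)))"

definition minv :: "complex mat \<Rightarrow> complex mat" where
  "minv A = (SOME B. B \<in> carrier_mat (dim_row A) (dim_row A) \<and>
                    A * B = 1\<^sub>m (dim_row A) \<and> B * A = 1\<^sub>m (dim_row A))"

definition kappa :: "complex mat \<Rightarrow> real" where
  "kappa U = spec_norm U * spec_norm (minv U)"

definition block_diag :: "nat \<Rightarrow> nat \<Rightarrow> (nat \<Rightarrow> complex mat) \<Rightarrow> complex mat" where
  "block_diag q N B = mat (q*N) (q*N)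
     (\<lambda>(i,j). if i div q = j div q then B (i div q) $$ (i mod q, j mod q) else 0)"

(* B_{N_T}(G): (N_T+1) x (N_T+1) block matrix, identity on the diagonal,
   -G on the first block subdiagonal, zero elsewhere *)
definition block_bidiag :: "nat \<Rightarrow> complex mat \<Rightarrow> complex mat" where
  "block_bidiag NT G = (let d = dim_row G in mat ((NT+1)*d) ((NT+1)*d)
     (\<lambda>(i,j). if i div d = j div d then (if i mod d = j mod d then 1 else 0)
              else if i div d = j div d + 1 then - (G $$ (i mod d, j mod d))
              else 0))"

end

theory Submission
  imports Defs "Jordan_Normal_Form.Determinant"
begin

definition nsq :: "complex vec \<Rightarrow> real" where
  "nsq v = (\<Sum>i<dim_vec v. (cmod (v $ i))^2)"

lemma nsq_nonneg: "nsq v \<ge> 0" unfolding nsq_def by (simp add: sum_nonneg)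

lemma vnorm2_nsq: "vnorm2 v = sqrt (nsq v)" unfolding vnorm2_def nsq_def by simp

lemma sum_split: fixes f :: "nat \<Rightarrow> 'a::comm_monoid_add" shows "(\<Sum>i<a*d. f i) = (\<Sum>t<a. \<Sum>r<d. f (t*d+r)) "
proof -
  have "(\<Sum>i<a*d. f i) = (\<Sum>t<a. sum f {t*d..<t*d+d})"
    using sum.nat_group[of f d a] by simp
  also have "\<dots> = (\<Sum>t<a. \<Sum>r<d. f (t*d+r))"
  proof (rule sum.cong[OF refl])
    fix t show "sum f {t*d..<t*d+d} = (\<Sum>r<d. f (t*d+r))"
      using sum.shift_bounds_nat_ivl[of f 0 "t*d" d] by (simp add: atLeast0LessThan add.commute)
  qed
  finally show ?thesis .
qed

definition blk :: "nat \<Rightarrow> complex vec \<Rightarrow> nat \<Rightarrow> complex vec" where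
  "blk d v t = vec d (\<lambda>r. v $ (t*d + r))"

lemma blk_carrier[simp]: "blk d v t \<in> carrier_vec d" unfolding blk_def by simp
lemma blk_dim[simp]: "dim_vec (blk d v t) = d" unfolding blk_def by simp
lemma blk_index[simp]: "r < d \<Longrightarrow> blk d v t $ r = v $ (t*d+r)" unfolding blk_def by simp

lemma nsq_blk: "dim_vec v = a*d \<Longrightarrow> nsq v = (\<Sum>t<a. nsq (blk d v t))"
  unfolding nsq_def using sum_split[of "\<lambda>i. (cmod (v $ i))^2" a d] by simp

lemma blk_eq:
  assumes "dim_vec x = k*d" "dim_vec y = k*d" "\<And>t. t < k \<Longrightarrow> blk d x t = blk d y t"
  shows "x = y"
proof (rule eq_vecI)
  show "dim_vec x = dim_vec y" using assms by simp
  fix i assume "i < dim_vec y"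
  hence i: "i < k*d" using assms by simp
  hence d: "d > 0" by (cases d) auto
  have t: "i div d < k" using i by (simp add: less_mult_imp_div_less)
  have r: "i mod d < d" using d by simp
  have "x $ i = blk d x (i div d) $ (i mod d)" using r by (simp add: mult.commute)
  also have "\<dots> = blk d y (i div d) $ (i mod d)" using assms(3)[OF t] by simp
  also have "\<dots> = y $ i" using r by (simp add: mult.commute)
  finally show "x $ i = y $ i" .
qed

lemma minv_eq:
  assumes "A \<in> carrier_mat n n" "B \<in> carrier_mat n n" "A * B = 1\<^sub>m n" "B * A = 1\<^sub>m n"
  shows "minv A = B"
proof -
  let ?P = "\<lambda>B. B \<in> carrier_mat (dim_row A) (dim_row A) \<and> A * B = 1\<^sub>m (dim_row A) \<and> B * A = 1\<^sub>m (dim_row A)"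
  have "?P B" using assms by auto
  hence P: "?P (minv A)" unfolding minv_def by (rule someI)
  have "minv A = minv A * (A * B)" using P assms by auto
  also have "\<dots> = (minv A * A) * B" using P assms by (metis assoc_mult_mat carrier_matD(1))
  also have "\<dots> = B" using P assms by (metis carrier_matD(1) left_mult_one_mat)
  finally show ?thesis .
qed

lemma minv_props:
  assumes "A \<in> carrier_mat n n" "B \<in> carrier_mat n n" "A * B = 1\<^sub>m n" "B * A = 1\<^sub>m n"
  shows "minv A \<in> carrier_mat n n" "A * minv A = 1\<^sub>m n" "minv A * A = 1\<^sub>m n"
  using minv_eq[OF assms] assms by auto

lemma invertible_minv:
  assumes "A \<in> carrier_mat n n" "invertible_mat A"
  shows "minv A \<in> carrier_mat n n" "A * minv A = 1\<^sub>m n" "minv A * A = 1\<^sub>m n"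
proof -
  obtain B where B: "A * B = 1\<^sub>m (dim_row A)" "B * A = 1\<^sub>m (dim_row B)"
    using assms(2) unfolding invertible_mat_def inverts_mat_def by auto
  have "dim_col B = n" using B(1) assms(1) by (metis carrier_matD(1) index_mult_mat(3) index_one_mat(3))
  moreover have "dim_row B = n" using B(2) assms(1) by (metis carrier_matD(2) index_mult_mat(3) index_one_mat(3))
  ultimately have Bc: "B \<in> carrier_mat n n" by auto
  show "minv A \<in> carrier_mat n n" "A * minv A = 1\<^sub>m n" "minv A * A = 1\<^sub>m n"
    using minv_props[OF assms(1) Bc] B assms(1) Bc by auto
qed

lemma lt_blk: "t < a \<Longrightarrow> r < (d::nat) \<Longrightarrow> t*d + r < a*d"
proof -
  assume "t < a" "r < d"
  hence "t*d + r < t*d + d" by simp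
  also have "\<dots> = Suc t * d" by simp
  also have "\<dots> \<le> a*d" using \<open>t<a\<close> by (intro mult_le_mono1) simp
  finally show ?thesis .
qed

lemma block_diag_carrier[simp]: "block_diag q N B \<in> carrier_mat (q*N) (q*N)"
  unfolding block_diag_def by simp

lemma block_diag_dims[simp]: "dim_row (block_diag q N B) = q*N" "dim_col (block_diag q N B) = q*N"
  unfolding block_diag_def by simp_all

lemma block_diag_mult:
  assumes y: "y \<in> carrier_vec (q*N)" and n: "n < N" and B: "B n \<in> carrier_mat q q"
  shows "blk q (block_diag q N B *\<^sub>v y) n = B n *\<^sub>v blk q y n"
proof (rule eq_vecI)
  show "dim_vec (blk q (block_diag q N B *\<^sub>v y) n) = dim_vec (B n *\<^sub>v blk q y n)" using B by simp
  fix k assume "k < dim_vec (B n *\<^sub>v blk q y n)"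
  hence k: "k < q" using B by simp
  have q: "q > 0" using k by simp
  have idx: "n*q+k < q*N" using lt_blk[OF n k] by (simp add: mult.commute)
  have "blk q (block_diag q N B *\<^sub>v y) n $ k = (\<Sum>j<q*N. block_diag q N B $$ (n*q+k, j) * y $ j)"
    using k idx y by (simp add: mult_mat_vec_def scalar_prod_def atLeast0LessThan)
  also have "\<dots> = (\<Sum>n'<N. \<Sum>k'<q. block_diag q N B $$ (n*q+k, n'*q+k') * y $ (n'*q+k'))"
    using sum_split[of _ N q] by (simp add: mult.commute)
  also have "\<dots> = (\<Sum>n'<N. if n' = n then (\<Sum>k'<q. B n $$ (k,k') * y $ (n*q+k')) else 0)"
  proof (rule sum.cong[OF refl])
    fix n' assume n': "n' \<in> {..<N}"
    show "(\<Sum>k'<q. block_diag q N B $$ (n*q+k, n'*q+k') * y $ (n'*q+k')) =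
          (if n' = n then (\<Sum>k'<q. B n $$ (k,k') * y $ (n*q+k')) else 0)"
    proof (rule trans[OF sum.cong[OF refl]])
      fix k' assume k': "k' \<in> {..<q}"
      have idx2: "n'*q+k' < q*N" using lt_blk[of n' N k' q] n' k' by (simp add: mult.commute)
      show "block_diag q N B $$ (n*q+k, n'*q+k') * y $ (n'*q+k') =
            (if n' = n then B n $$ (k,k') * y $ (n*q+k') else 0)"
        using idx idx2 k k' q unfolding block_diag_def by auto
    qed auto
  qed
  also have "\<dots> = (\<Sum>k'<q. B n $$ (k,k') * y $ (n*q+k'))" using n by simp
  also have "\<dots> = (B n *\<^sub>v blk q y n) $ k"
    using k B by (simp add: mult_mat_vec_def scalar_prod_def atLeast0LessThan)
  finally show "blk q (block_diag q N B *\<^sub>v y) n $ k = (B n *\<^sub>v blk q y n) $ k" .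
qed

lemma block_bidiag_carrier[simp]:
  "G \<in> carrier_mat d d \<Longrightarrow> block_bidiag NT G \<in> carrier_mat ((NT+1)*d) ((NT+1)*d)"
  unfolding block_bidiag_def Let_def by simp

lemma block_bidiag_dims[simp]: "dim_row (block_bidiag NT G) = (NT+1)*dim_row G" "dim_col (block_bidiag NT G) = (NT+1)*dim_row G"
  unfolding block_bidiag_def Let_def by simp_all

lemma block_bidiag_mult:
  assumes G: "G \<in> carrier_mat d d" and v: "v \<in> carrier_vec ((NT+1)*d)" and t: "t \<le> NT"
  shows "blk d (block_bidiag NT G *\<^sub>v v) t =
         (if t = 0 then blk d v 0 else blk d v t - G *\<^sub>v blk d v (t-1))"
proof (rule eq_vecI)
  show "dim_vec (blk d (block_bidiag NT G *\<^sub>v v) t) =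
        dim_vec (if t = 0 then blk d v 0 else blk d v t - G *\<^sub>v blk d v (t-1))" using G by simp
  fix r assume "r < dim_vec (if t = 0 then blk d v 0 else blk d v t - G *\<^sub>v blk d v (t-1))"
  hence r: "r < d" using G by (simp split: if_splits)
  have dr: "dim_row G = d" using G by simp
  have idx: "t*d+r < (NT+1)*d" using lt_blk[of t "NT+1" r d] t r by simp
  let ?M = "block_bidiag NT G"
  have "blk d (?M *\<^sub>v v) t $ r = (\<Sum>j<(NT+1)*d. ?M $$ (t*d+r, j) * v $ j)"
    using r idx v G dr by (simp add: mult_mat_vec_def scalar_prod_def atLeast0LessThan)
  also have "\<dots> = (\<Sum>s<NT+1. \<Sum>r'<d. ?M $$ (t*d+r, s*d+r') * v $ (s*d+r'))"
    by (rule sum_split)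
  also have "\<dots> = (\<Sum>s<NT+1. (if s = t then v $ (t*d+r) else 0) +
        (if Suc s = t then - (\<Sum>r'<d. G $$ (r,r') * v $ (s*d+r')) else 0))"
  proof (rule sum.cong[OF refl])
    fix s assume s: "s \<in> {..<NT+1}"
    have "(\<Sum>r'<d. ?M $$ (t*d+r, s*d+r') * v $ (s*d+r')) =
          (\<Sum>r'<d. (if s = t \<and> r' = r then v $ (t*d+r) else 0) +
              (if Suc s = t then - (G $$ (r,r') * v $ (s*d+r')) else 0))"
    proof (rule sum.cong[OF refl])
      fix r' assume r': "r' \<in> {..<d}"
      have idx2: "s*d+r' < (NT+1)*d" using lt_blk[of s "NT+1" r' d] s r' by simp
      have d0: "d > 0" using r by simp
      show "?M $$ (t*d+r, s*d+r') * v $ (s*d+r') =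
          (if s = t \<and> r' = r then v $ (t*d+r) else 0) +
              (if Suc s = t then - (G $$ (r,r') * v $ (s*d+r')) else 0)"
        using idx idx2 r r' d0 unfolding block_bidiag_def Let_def dr by auto
    qed
    also have "\<dots> = (if s = t then v $ (t*d+r) else 0) +
        (if Suc s = t then - (\<Sum>r'<d. G $$ (r,r') * v $ (s*d+r')) else 0)"
      using r by (simp add: sum.distrib sum_negf)
    finally show "(\<Sum>r'<d. ?M $$ (t*d+r, s*d+r') * v $ (s*d+r')) = \<dots>" .
  qed
  also have "\<dots> = v $ (t*d+r) + (if t = 0 then 0 else - (\<Sum>r'<d. G $$ (r,r') * v $ ((t-1)*d+r')))"
    using t by (cases t) (auto simp: sum.distrib)
  also have "\<dots> = (if t = 0 then blk d v 0 else blk d v t - G *\<^sub>v blk d v (t-1)) $ r"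
    using r G by (auto simp: mult_mat_vec_def scalar_prod_def atLeast0LessThan)
  finally show "blk d (?M *\<^sub>v v) t $ r = (if t = 0 then blk d v 0 else blk d v t - G *\<^sub>v blk d v (t-1)) $ r" .
qed

lemma cs_real:
  fixes a b :: "nat \<Rightarrow> real"
  shows "(\<Sum>i\<in>I. a i * b i)^2 \<le> (\<Sum>i\<in>I. (a i)^2) * (\<Sum>i\<in>I. (b i)^2)"
proof -
  have "0 \<le> (\<Sum>i\<in>I. \<Sum>j\<in>I. (a i * b j - a j * b i)^2)" by (simp add: sum_nonneg)
  also have "\<dots> = (\<Sum>i\<in>I. \<Sum>j\<in>I. (a i)^2 * (b j)^2 + (a j)^2 * (b i)^2 - 2 * ((a i * b i) * (a j * b j)))"
    by (rule sum.cong[OF refl], rule sum.cong[OF refl]) (simp add: power2_eq_square algebra_simps)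
  also have "\<dots> = (\<Sum>i\<in>I. \<Sum>j\<in>I. (a i)^2 * (b j)^2) + (\<Sum>i\<in>I. \<Sum>j\<in>I. (b i)^2 * (a j)^2)
       - 2 * (\<Sum>i\<in>I. \<Sum>j\<in>I. (a i * b i) * (a j * b j))"
    by (simp add: sum_subtractf sum.distrib sum_distrib_left mult.commute)
  also have "\<dots> = 2 * ((\<Sum>i\<in>I. (a i)^2) * (\<Sum>i\<in>I. (b i)^2)) - 2 * (\<Sum>i\<in>I. a i * b i)^2"
    unfolding sum_product[symmetric] by (simp add: power2_eq_square)
  finally show ?thesis by simp
qed

lemma cs_weighted:
  fixes w b :: "nat \<Rightarrow> real"
  assumes "\<And>i. i \<in> I \<Longrightarrow> w i \<ge> 0"
  shows "(\<Sum>i\<in>I. w i * b i)^2 \<le> (\<Sum>i\<in>I. w i) * (\<Sum>i\<in>I. w i * (b i)^2)"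
proof -
  have "(\<Sum>i\<in>I. w i * b i) = (\<Sum>i\<in>I. sqrt (w i) * (sqrt (w i) * b i))"
    using assms by (intro sum.cong) (auto simp: real_sqrt_mult_self mult.assoc[symmetric])
  moreover have "(\<Sum>i\<in>I. w i) = (\<Sum>i\<in>I. (sqrt (w i))^2)" using assms by (intro sum.cong) auto
  moreover have "(\<Sum>i\<in>I. w i * (b i)^2) = (\<Sum>i\<in>I. (sqrt (w i) * b i)^2)"
    using assms by (intro sum.cong) (auto simp: power_mult_distrib)
  ultimately show ?thesis using cs_real[of "\<lambda>i. sqrt (w i)" "\<lambda>i. sqrt (w i) * b i" I] by simp
qed

definition frob :: "complex mat \<Rightarrow> real" where
  "frob A = (\<Sum>i<dim_row A. \<Sum>j<dim_col A. (cmod (A $$ (i,j)))^2)"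

lemma mat_vec_bound:
  assumes v: "v \<in> carrier_vec (dim_col A)"
  shows "nsq (A *\<^sub>v v) \<le> frob A * nsq v"
proof -
  have "nsq (A *\<^sub>v v) = (\<Sum>i<dim_row A. (cmod (\<Sum>j<dim_col A. A $$ (i,j) * v $ j))^2)"
    using v unfolding nsq_def by (simp add: mult_mat_vec_def scalar_prod_def atLeast0LessThan)
  also have "\<dots> \<le> (\<Sum>i<dim_row A. (\<Sum>j<dim_col A. (cmod (A $$ (i,j)))^2) * nsq v)"
  proof (rule sum_mono)
    fix i
    have "cmod (\<Sum>j<dim_col A. A $$ (i,j) * v $ j) \<le> (\<Sum>j<dim_col A. cmod (A $$ (i,j)) * cmod (v $ j))"
      by (rule order_trans[OF norm_sum]) (simp add: norm_mult)
    hence "(cmod (\<Sum>j<dim_col A. A $$ (i,j) * v $ j))^2 \<le> (\<Sum>j<dim_col A. cmod (A $$ (i,j)) * cmod (v $ j))^2"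
      by (simp add: power_mono)
    also have "\<dots> \<le> (\<Sum>j<dim_col A. (cmod (A $$ (i,j)))^2) * (\<Sum>j<dim_col A. (cmod (v $ j))^2)"
      by (rule cs_real)
    finally show "(cmod (\<Sum>j<dim_col A. A $$ (i,j) * v $ j))^2 \<le> (\<Sum>j<dim_col A. (cmod (A $$ (i,j)))^2) * nsq v"
      using v unfolding nsq_def by simp
  qed
  also have "\<dots> = frob A * nsq v" unfolding frob_def by (simp add: sum_distrib_right)
  finally show ?thesis .
qed

lemma nsq_smult: "nsq (c \<cdot>\<^sub>v v) = (cmod c)^2 * nsq v"
  unfolding nsq_def by (simp add: norm_mult power_mult_distrib sum_distrib_left)

lemma nsq_zero_iff: "nsq v = 0 \<Longrightarrow> v = 0\<^sub>v (dim_vec v)"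
proof -
  assume "nsq v = 0"
  hence "\<forall>i\<in>{..<dim_vec v}. (cmod (v $ i))^2 = 0"
    unfolding nsq_def by (subst sum_nonneg_eq_0_iff[symmetric]) auto
  thus ?thesis by (intro eq_vecI) auto
qed

definition snset :: "complex mat \<Rightarrow> real set" where
  "snset A = {vnorm2 (A *\<^sub>v v) | v. v \<in> carrier_vec (dim_col A) \<and> vnorm2 v \<le> 1}"

lemma spec_norm_snset: "spec_norm A = Sup (snset A)" unfolding spec_norm_def snset_def by simp

lemma snset_bdd: "bdd_above (snset A)"
proof (rule bdd_aboveI)
  fix x assume "x \<in> snset A"
  then obtain v where v: "v \<in> carrier_vec (dim_col A)" "vnorm2 v \<le> 1" and x: "x = vnorm2 (A *\<^sub>v v)"
    unfolding snset_def by auto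
  have "nsq v \<le> 1" using v(2) unfolding vnorm2_nsq by (metis real_sqrt_le_1_iff)
  have f0: "frob A \<ge> 0" unfolding frob_def by (simp add: sum_nonneg)
  have "nsq (A *\<^sub>v v) \<le> frob A * nsq v" by (rule mat_vec_bound[OF v(1)])
  also have "\<dots> \<le> frob A" using \<open>nsq v \<le> 1\<close> f0 nsq_nonneg[of v] by (simp add: mult_left_le)
  finally show "x \<le> sqrt (frob A)" unfolding x vnorm2_nsq by simp
qed

lemma snset_ne: "0 \<in> snset A"
proof -
  have "vnorm2 (A *\<^sub>v 0\<^sub>v (dim_col A)) = 0" "vnorm2 (0\<^sub>v (dim_col A)) = 0"
    unfolding vnorm2_def by (simp_all add: mult_mat_vec_def scalar_prod_def)
  thus ?thesis unfolding snset_def by force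
qed

lemma spec_norm_nonneg: "spec_norm A \<ge> 0"
  unfolding spec_norm_snset using snset_ne snset_bdd by (rule cSup_upper)

lemma spec_norm_le:
  assumes "\<And>v. v \<in> carrier_vec (dim_col A) \<Longrightarrow> vnorm2 v \<le> 1 \<Longrightarrow> vnorm2 (A *\<^sub>v v) \<le> B"
  shows "spec_norm A \<le> B"
  unfolding spec_norm_snset using snset_ne assms unfolding snset_def by (intro cSup_least) auto

lemma spec_norm_ge:
  assumes v: "v \<in> carrier_vec (dim_col A)"
  shows "nsq (A *\<^sub>v v) \<le> (spec_norm A)^2 * nsq v"
proof (cases "nsq v = 0")
  case True
  hence "v = 0\<^sub>v (dim_col A)" using nsq_zero_iff[of v] v by auto
  hence "nsq (A *\<^sub>v v) = 0" unfolding nsq_def by (simp add: mult_mat_vec_def scalar_prod_def)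
  thus ?thesis using True by simp
next
  case False
  hence pos: "nsq v > 0" using nsq_nonneg[of v] by simp
  define c where "c = complex_of_real (1 / sqrt (nsq v))"
  have "cmod c = 1 / sqrt (nsq v)" unfolding c_def using pos by (simp only: norm_of_real) simp
  hence cm: "(cmod c)^2 = 1 / nsq v" using pos by (simp add: power_divide)
  have u: "c \<cdot>\<^sub>v v \<in> carrier_vec (dim_col A)" using v by simp
  have nu: "nsq (c \<cdot>\<^sub>v v) = 1" using cm pos by (simp add: nsq_smult)
  hence "vnorm2 (A *\<^sub>v (c \<cdot>\<^sub>v v)) \<in> snset A" unfolding snset_def vnorm2_nsq using u by force
  hence "vnorm2 (A *\<^sub>v (c \<cdot>\<^sub>v v)) \<le> spec_norm A" unfolding spec_norm_snset using snset_bdd by (rule cSup_upper)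
  hence "sqrt (nsq (A *\<^sub>v (c \<cdot>\<^sub>v v))) \<le> spec_norm A" unfolding vnorm2_nsq .
  hence "nsq (A *\<^sub>v (c \<cdot>\<^sub>v v)) \<le> (spec_norm A)^2"
    by (metis nsq_nonneg real_le_rsqrt real_sqrt_le_iff spec_norm_nonneg sqrt_le_D)
  moreover have "A *\<^sub>v (c \<cdot>\<^sub>v v) = c \<cdot>\<^sub>v (A *\<^sub>v v)" using v by (intro mult_mat_vec[of A "dim_row A" "dim_col A"]) auto
  ultimately have "nsq (A *\<^sub>v v) / nsq v \<le> (spec_norm A)^2" using cm by (simp add: nsq_smult)
  thus ?thesis using pos by (simp add: divide_le_eq)
qed

lemma nsq_complex: "complex_of_real (nsq v) = (\<Sum>i<dim_vec v. v $ i * cnj (v $ i))"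
  unfolding nsq_def of_real_sum by (intro sum.cong refl) (simp only: complex_norm_square)

lemma swap3: "(\<Sum>i\<in>I. \<Sum>j\<in>J. \<Sum>k\<in>K. F i j k) = (\<Sum>j\<in>J. \<Sum>k\<in>K. \<Sum>i\<in>I. F i j k)"
  by (subst sum.swap) (rule sum.cong[OF refl], rule sum.swap)

lemma isometry:
  assumes A: "A \<in> carrier_mat n n" and U: "adj A * A = 1\<^sub>m n" and x: "x \<in> carrier_vec n"
  shows "nsq (A *\<^sub>v x) = nsq x"
proof -
  have ortho: "(\<Sum>i<n. cnj (A $$ (i,k)) * A $$ (i,j)) = (if k = j then 1 else 0)" if "k < n" "j < n" for k j
  proof -
    have "(adj A * A) $$ (k,j) = (\<Sum>i<n. cnj (A $$ (i,k)) * A $$ (i,j))"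
      using A that unfolding adj_def by (simp add: scalar_prod_def atLeast0LessThan)
    thus ?thesis using U that by simp
  qed
  have "complex_of_real (nsq (A *\<^sub>v x)) =
     (\<Sum>i<n. (\<Sum>j<n. A $$ (i,j) * x $ j) * cnj (\<Sum>k<n. A $$ (i,k) * x $ k))"
    unfolding nsq_complex using A x by (simp add: mult_mat_vec_def scalar_prod_def atLeast0LessThan)
  also have "\<dots> = (\<Sum>i<n. \<Sum>j<n. \<Sum>k<n. (x $ j * cnj (x $ k)) * (cnj (A $$ (i,k)) * A $$ (i,j)))"
    unfolding cnj_sum sum_product by (intro sum.cong refl) (simp add: mult.commute mult.left_commute)
  also have "\<dots> = (\<Sum>j<n. \<Sum>k<n. (x $ j * cnj (x $ k)) * (\<Sum>i<n. cnj (A $$ (i,k)) * A $$ (i,j)))"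
    by (rule trans[OF swap3]) (simp add: sum_distrib_left)
  also have "\<dots> = (\<Sum>j<n. \<Sum>k<n. (x $ j * cnj (x $ k)) * (if k = j then 1 else 0))"
    by (intro sum.cong refl) (simp add: ortho)
  also have "\<dots> = (\<Sum>j<n. x $ j * cnj (x $ j))" by (simp add: if_distrib cong: if_cong)
  also have "\<dots> = complex_of_real (nsq x)" unfolding nsq_complex using x by simp
  finally show ?thesis by (simp only: of_real_eq_iff)
qed

lemma adj_carrier[simp]: "A \<in> carrier_mat a b \<Longrightarrow> adj A \<in> carrier_mat b a"
  unfolding adj_def by auto

lemma adj_adj: "adj (adj A) = A"
  unfolding adj_def by (rule eq_matI) auto

lemma scalar_closed:
  fixes z xi :: "nat \<Rightarrow> complex"
  assumes z0: "z 0 = 0" and zs: "\<And>t. t < N \<Longrightarrow> z (Suc t) = mu * z t + c * xi t"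
  shows "t \<le> N \<Longrightarrow> z t = (\<Sum>s<t. mu ^ (t - 1 - s) * c * xi s)"
proof (induction t)
  case 0 thus ?case using z0 by simp
next
  case (Suc t)
  have tN: "t < N" using Suc.prems by simp
  have IH: "z t = (\<Sum>s<t. mu ^ (t - 1 - s) * c * xi s)" using Suc.IH tN by simp
  have "z (Suc t) = mu * z t + c * xi t" using zs[OF tN] .
  also have "\<dots> = mu * (\<Sum>s<t. mu ^ (t - 1 - s) * c * xi s) + c * xi t" by (simp only: IH)
  also have "mu * (\<Sum>s<t. mu ^ (t - 1 - s) * c * xi s) = (\<Sum>s<t. mu * mu ^ (t - 1 - s) * c * xi s)"
    by (simp add: sum_distrib_left mult.assoc)
  also have "\<dots> = (\<Sum>s<t. mu ^ (Suc t - 1 - s) * c * xi s)"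
  proof (intro sum.cong refl)
    fix s assume "s \<in> {..<t}"
    hence "Suc t - 1 - s = Suc (t - 1 - s)" by auto
    thus "mu * mu ^ (t - 1 - s) * c * xi s = mu ^ (Suc t - 1 - s) * c * xi s" by simp
  qed
  also have "(\<Sum>s<t. mu ^ (Suc t - 1 - s) * c * xi s) + c * xi t = (\<Sum>s<Suc t. mu ^ (Suc t - 1 - s) * c * xi s)"
    by (simp only: sum.lessThan_Suc) simp
  finally show ?case .
qed

lemma tail_sum_le:
  fixes a :: "nat \<Rightarrow> real"
  assumes nn: "\<And>k. a k \<ge> 0" and s: "s < N"
  shows "(\<Sum>t\<le>N. if s < t then a (t - Suc s) else 0) \<le> (\<Sum>k<N. a k)"
proof -
  have "(\<Sum>t\<le>N. if s < t then a (t - Suc s) else 0) = (\<Sum>t\<in>{t\<in>{..N}. s < t}. a (t - Suc s))"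
    by (rule sum.inter_filter[symmetric]) simp
  also have "{t\<in>{..N}. s < t} = {0 + Suc s..<(N - s) + Suc s}" using s by auto
  also have "(\<Sum>t\<in>{0 + Suc s..<(N - s) + Suc s}. a (t - Suc s)) = (\<Sum>k\<in>{0..<N - s}. a k)"
    by (subst sum.shift_bounds_nat_ivl) simp
  also have "\<dots> \<le> (\<Sum>k<N. a k)" using nn by (intro sum_mono2) auto
  finally show ?thesis .
qed

lemma scalar_bound:
  fixes z xi :: "nat \<Rightarrow> complex"
  assumes z0: "z 0 = 0" and zs: "\<And>t. t < N \<Longrightarrow> z (Suc t) = mu * z t + c * xi t"
  shows "(\<Sum>t\<le>N. (cmod (z t))^2) \<le> (cmod c * (\<Sum>k<N. cmod mu ^ k))^2 * (\<Sum>t<N. (cmod (xi t))^2)"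
proof -
  define a where "a k = cmod c * cmod mu ^ k" for k
  define b where "b s = cmod (xi s)" for s
  define A where "A = (\<Sum>k<N. a k)"
  have ann: "a k \<ge> 0" for k unfolding a_def by simp
  have A0: "A \<ge> 0" unfolding A_def using ann by (simp add: sum_nonneg)
  have Aeq: "cmod c * (\<Sum>k<N. cmod mu ^ k) = A" unfolding A_def a_def by (simp add: sum_distrib_left)
  have pt: "(cmod (z t))^2 \<le> A * (\<Sum>s<N. if s < t then a (t - Suc s) * (b s)^2 else 0)" if t: "t \<le> N" for t
  proof -
    have "z t = (\<Sum>s<t. mu ^ (t - 1 - s) * c * xi s)" by (rule scalar_closed[OF z0 zs t])
    hence "cmod (z t) \<le> (\<Sum>s<t. a (t - Suc s) * b s)"
      unfolding a_def b_def by (auto intro!: order_trans[OF norm_sum] simp: norm_mult norm_power mult.commute mult.left_commute)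
    hence "(cmod (z t))^2 \<le> (\<Sum>s<t. a (t - Suc s) * b s)^2" by (simp add: power_mono)
    also have "\<dots> \<le> (\<Sum>s<t. a (t - Suc s)) * (\<Sum>s<t. a (t - Suc s) * (b s)^2)"
      using ann by (intro cs_weighted) auto
    also have "(\<Sum>s<t. a (t - Suc s)) = (\<Sum>k<t. a k)" by (rule sum.nat_diff_reindex)
    also have "\<dots> \<le> A" unfolding A_def using ann t by (intro sum_mono2) auto
    also have "(\<Sum>s<t. a (t - Suc s) * (b s)^2) = (\<Sum>s<N. if s < t then a (t - Suc s) * (b s)^2 else 0)"
    proof -
      have "(\<Sum>s<N. if s < t then a (t - Suc s) * (b s)^2 else 0) = (\<Sum>s\<in>{s\<in>{..<N}. s < t}. a (t - Suc s) * (b s)^2)"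
        by (rule sum.inter_filter[symmetric]) simp
      also have "{s\<in>{..<N}. s < t} = {..<t}" using t by auto
      finally show ?thesis by simp
    qed
    finally show ?thesis using A0 ann by (simp add: mult_right_mono sum_nonneg)
  qed
  have "(\<Sum>t\<le>N. (cmod (z t))^2) \<le> (\<Sum>t\<le>N. A * (\<Sum>s<N. if s < t then a (t - Suc s) * (b s)^2 else 0))"
    using pt by (intro sum_mono) auto
  also have "\<dots> = A * (\<Sum>s<N. (b s)^2 * (\<Sum>t\<le>N. if s < t then a (t - Suc s) else 0))"
    by (simp add: sum_distrib_left[symmetric] sum.swap[of _ "{..N}"] sum_distrib_left if_distrib mult.commute cong: if_cong)
  also have "\<dots> \<le> A * (\<Sum>s<N. (b s)^2 * A)"
    using A0 by (intro mult_left_mono sum_mono mult_left_mono) (auto simp: A_def intro!: tail_sum_le ann)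
  also have "\<dots> = A^2 * (\<Sum>t<N. (cmod (xi t))^2)"
    unfolding b_def by (simp add: sum_distrib_left power2_eq_square mult_ac)
  finally show ?thesis unfolding Aeq .
qed

lemma mat_diag_mult_vec: "v \<in> carrier_vec q \<Longrightarrow> l < q \<Longrightarrow> (mat_diag q f *\<^sub>v v) $ l = f l * v $ l"
  unfolding mat_diag_def mult_mat_vec_def scalar_prod_def
  by (subst sum.remove[of _ l]) auto

lemma mat_diag_dims[simp]: "dim_row (mat_diag q f) = q" "dim_col (mat_diag q f) = q"
  unfolding mat_diag_def by simp_all

lemma nsq_swap: assumes "\<And>t. t \<in> T \<Longrightarrow> dim_vec (z t) = q"
  shows "(\<Sum>t\<in>T. nsq (z t)) = (\<Sum>l<q. \<Sum>t\<in>T. (cmod (z t $ l))^2)"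
proof -
  have "(\<Sum>t\<in>T. nsq (z t)) = (\<Sum>t\<in>T. \<Sum>l<q. (cmod (z t $ l))^2)"
    using assms by (intro sum.cong) (auto simp: nsq_def)
  also have "\<dots> = (\<Sum>l<q. \<Sum>t\<in>T. (cmod (z t $ l))^2)" by (rule sum.swap)
  finally show ?thesis .
qed

lemma core_n:
  fixes P H U Ui :: "complex mat" and mu h :: "nat \<Rightarrow> complex" and y x :: "nat \<Rightarrow> complex vec"
  assumes q: "q > 0"
    and U: "U \<in> carrier_mat q q" and Ui: "Ui \<in> carrier_mat q q" and UUi: "U * Ui = 1\<^sub>m q"
    and P: "P \<in> carrier_mat q q" and H: "H \<in> carrier_mat q q"
    and dP: "Ui * P * U = mat_diag q mu" and dH: "Ui * H * U = mat_diag q h"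
    and y: "\<And>t. y t \<in> carrier_vec q" and x: "\<And>t. x t \<in> carrier_vec q"
    and y0: "y 0 = 0\<^sub>v q" and ys: "\<And>t. t < N \<Longrightarrow> y (Suc t) = P *\<^sub>v y t + H *\<^sub>v x t"
  shows "(\<Sum>t\<le>N. nsq (y t)) \<le> (spec_norm U * spec_norm Ui *
     Max ((\<lambda>l. cmod (h l) * (\<Sum>k<N. cmod (mu l)^k)) ` {..<q}))^2 * (\<Sum>t<N. nsq (x t))"
proof -
  define M where "M = Max ((\<lambda>l. cmod (h l) * (\<Sum>k<N. cmod (mu l)^k)) ` {..<q})"
  have Ml: "cmod (h l) * (\<Sum>k<N. cmod (mu l)^k) \<le> M" if "l < q" for l
    unfolding M_def using that by (intro Max_ge) auto
  have M0: "M \<ge> 0" using Ml[OF q] by (smt (verit) mult_nonneg_nonneg norm_ge_zero sum_nonneg zero_le_power)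
  define z where "z t = Ui *\<^sub>v y t" for t
  define xi where "xi t = Ui *\<^sub>v x t" for t
  have zc: "z t \<in> carrier_vec q" for t unfolding z_def using Ui y by simp
  have xic: "xi t \<in> carrier_vec q" for t unfolding xi_def using Ui x by simp
  have yU: "y t = U *\<^sub>v z t" for t
  proof -
    have "U *\<^sub>v z t = (U * Ui) *\<^sub>v y t" unfolding z_def using U Ui y by simp
    also have "\<dots> = y t" using UUi y by simp
    finally show ?thesis by simp
  qed
  have xU: "x t = U *\<^sub>v xi t" for t
  proof -
    have "U *\<^sub>v xi t = (U * Ui) *\<^sub>v x t" unfolding xi_def using U Ui x by simp
    also have "\<dots> = x t" using UUi x by simp
    finally show ?thesis by simp
  qed
  have zs: "z (Suc t) = mat_diag q mu *\<^sub>v z t + mat_diag q h *\<^sub>v xi t" if t: "t < N" for t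
  proof -
    have "z (Suc t) = Ui *\<^sub>v (P *\<^sub>v y t + H *\<^sub>v x t)"
      unfolding z_def using ys[OF t] by simp
    also have "\<dots> = Ui *\<^sub>v (P *\<^sub>v (U *\<^sub>v z t) + H *\<^sub>v (U *\<^sub>v xi t))"
      by (simp only: yU[symmetric] xU[symmetric])
    also have "\<dots> = Ui *\<^sub>v (P *\<^sub>v (U *\<^sub>v z t)) + Ui *\<^sub>v (H *\<^sub>v (U *\<^sub>v xi t))"
      using Ui P H U zc xic by (intro mult_add_distrib_mat_vec) auto
    also have "Ui *\<^sub>v (P *\<^sub>v (U *\<^sub>v z t)) = (Ui * P * U) *\<^sub>v z t"
    proof -
      have "(Ui * P * U) *\<^sub>v z t = (Ui * P) *\<^sub>v (U *\<^sub>v z t)"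
        using Ui P U zc[of t] by (intro assoc_mult_mat_vec) auto
      also have "\<dots> = Ui *\<^sub>v (P *\<^sub>v (U *\<^sub>v z t))"
        using Ui P U zc[of t] by (intro assoc_mult_mat_vec) auto
      finally show ?thesis by simp
    qed
    also have "Ui *\<^sub>v (H *\<^sub>v (U *\<^sub>v xi t)) = (Ui * H * U) *\<^sub>v xi t"
    proof -
      have "(Ui * H * U) *\<^sub>v xi t = (Ui * H) *\<^sub>v (U *\<^sub>v xi t)"
        using Ui H U xic[of t] by (intro assoc_mult_mat_vec) auto
      also have "\<dots> = Ui *\<^sub>v (H *\<^sub>v (U *\<^sub>v xi t))"
        using Ui H U xic[of t] by (intro assoc_mult_mat_vec) auto
      finally show ?thesis by simp
    qed
    finally show ?thesis unfolding dP dH .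
  qed
  have snU: "nsq (U *\<^sub>v z t) \<le> (spec_norm U)^2 * nsq (z t)" for t
    using spec_norm_ge[of "z t" U] U zc by simp
  have snUi: "nsq (Ui *\<^sub>v x t) \<le> (spec_norm Ui)^2 * nsq (x t)" for t
    using spec_norm_ge[of "x t" Ui] Ui x by simp
  have z0: "z 0 = 0\<^sub>v q" unfolding z_def y0 using Ui by (intro eq_vecI) (auto simp: mult_mat_vec_def row_def)
  have comp: "(\<Sum>t\<le>N. (cmod (z t $ l))^2) \<le> M^2 * (\<Sum>t<N. (cmod (xi t $ l))^2)" if l: "l < q" for l
  proof -
    have "(\<Sum>t\<le>N. (cmod (z t $ l))^2) \<le> (cmod (h l) * (\<Sum>k<N. cmod (mu l)^k))^2 * (\<Sum>t<N. (cmod (xi t $ l))^2)"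
    proof (rule scalar_bound)
      show "z 0 $ l = 0" using z0 l by simp
      fix t assume t: "t < N"
      show "z (Suc t) $ l = mu l * z t $ l + h l * xi t $ l"
        using zs[OF t] l zc[of t] xic[of t] mat_diag_mult_vec[of "z t" q l mu] mat_diag_mult_vec[of "xi t" q l h]
        by (simp del: index_mult_mat_vec)
    qed
    also have "\<dots> \<le> M^2 * (\<Sum>t<N. (cmod (xi t $ l))^2)"
      using Ml[OF l] by (intro mult_right_mono power_mono) (auto simp: sum_nonneg)
    finally show ?thesis .
  qed
  have "(\<Sum>t\<le>N. nsq (y t)) \<le> (\<Sum>t\<le>N. (spec_norm U)^2 * nsq (z t))"
    unfolding yU using snU by (intro sum_mono) auto
  also have "\<dots> = (spec_norm U)^2 * (\<Sum>l<q. \<Sum>t\<le>N. (cmod (z t $ l))^2)"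
    using zc by (simp add: sum_distrib_left[symmetric] nsq_swap[of _ _ q])
  also have "\<dots> \<le> (spec_norm U)^2 * (\<Sum>l<q. M^2 * (\<Sum>t<N. (cmod (xi t $ l))^2))"
    using comp by (intro mult_left_mono sum_mono) auto
  also have "\<dots> = (spec_norm U)^2 * M^2 * (\<Sum>t<N. nsq (xi t))"
    using xic by (simp add: sum_distrib_left[symmetric] nsq_swap[of _ _ q] mult.assoc)
  also have "\<dots> \<le> (spec_norm U)^2 * M^2 * (\<Sum>t<N. (spec_norm Ui)^2 * nsq (x t))"
    unfolding xi_def using snUi by (intro mult_left_mono sum_mono) auto
  also have "\<dots> = (spec_norm U * spec_norm Ui * M)^2 * (\<Sum>t<N. nsq (x t))"
    by (simp add: sum_distrib_left power_mult_distrib mult_ac)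
  finally show ?thesis unfolding M_def .
qed

lemma blk_add: assumes "dim_vec a = m" "dim_vec b = m" "(Suc t)*d \<le> m"
  shows "blk d (a + b) t = blk d a t + blk d b t"
proof (rule eq_vecI)
  fix r assume "r < dim_vec (blk d a t + blk d b t)"
  hence r: "r < d" by simp
  have "t*d + r < Suc t * d" using r by simp
  hence "t*d + r < m" using assms(3) by linarith
  thus "blk d (a + b) t $ r = (blk d a t + blk d b t) $ r" using r assms by simp
qed simp

lemma mult_zero_vec: "A \<in> carrier_mat n m \<Longrightarrow> A *\<^sub>v 0\<^sub>v m = 0\<^sub>v n"
  by (intro eq_vecI) (auto simp: mult_mat_vec_def row_def)

lemma core_full:
  fixes F G H :: "complex mat" and P Hb U Ui :: "nat \<Rightarrow> complex mat"
    and mu h :: "nat \<Rightarrow> nat \<Rightarrow> complex" and w x :: "nat \<Rightarrow> complex vec"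
  assumes q: "q > 0" and Nx: "Nx > 0"
    and F: "F \<in> carrier_mat (q*Nx) (q*Nx)" and FF: "F * adj F = 1\<^sub>m (q*Nx)" "adj F * F = 1\<^sub>m (q*Nx)"
    and G: "G \<in> carrier_mat (q*Nx) (q*Nx)" and H: "H \<in> carrier_mat (q*Nx) (q*Nx)"
    and hG: "\<And>y n. y \<in> carrier_vec (q*Nx) \<Longrightarrow> n < Nx \<Longrightarrow> blk q (adj F *\<^sub>v (G *\<^sub>v (F *\<^sub>v y))) n = P n *\<^sub>v blk q y n"
    and hH: "\<And>y n. y \<in> carrier_vec (q*Nx) \<Longrightarrow> n < Nx \<Longrightarrow> blk q (adj F *\<^sub>v (H *\<^sub>v (F *\<^sub>v y))) n = Hb n *\<^sub>v blk q y n"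
    and blocks: "\<And>n. n < Nx \<Longrightarrow> U n \<in> carrier_mat q q \<and> Ui n \<in> carrier_mat q q \<and> U n * Ui n = 1\<^sub>m q
        \<and> P n \<in> carrier_mat q q \<and> Hb n \<in> carrier_mat q q
        \<and> Ui n * P n * U n = mat_diag q (mu n) \<and> Ui n * Hb n * U n = mat_diag q (h n)"
    and w: "\<And>t. w t \<in> carrier_vec (q*Nx)" and x: "\<And>t. x t \<in> carrier_vec (q*Nx)"
    and w0: "w 0 = 0\<^sub>v (q*Nx)" and ws: "\<And>t. t < N \<Longrightarrow> w (Suc t) = G *\<^sub>v w t + H *\<^sub>v x t"
  shows "(\<Sum>t\<le>N. nsq (w t)) \<le> (Max ((\<lambda>n. spec_norm (U n) * spec_norm (Ui n) *
      Max ((\<lambda>l. cmod (h n l) * (\<Sum>k<N. cmod (mu n l)^k)) ` {..<q})) ` {..<Nx}))^2 * (\<Sum>t<N. nsq (x t))"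
proof -
  define D where "D = q*Nx"
  define B where "B = Max ((\<lambda>n. spec_norm (U n) * spec_norm (Ui n) *
      Max ((\<lambda>l. cmod (h n l) * (\<Sum>k<N. cmod (mu n l)^k)) ` {..<q})) ` {..<Nx})"
  have Bn: "0 \<le> spec_norm (U n) * spec_norm (Ui n) * Max ((\<lambda>l. cmod (h n l) * (\<Sum>k<N. cmod (mu n l)^k)) ` {..<q})
      \<and> spec_norm (U n) * spec_norm (Ui n) * Max ((\<lambda>l. cmod (h n l) * (\<Sum>k<N. cmod (mu n l)^k)) ` {..<q}) \<le> B"
    if n: "n < Nx" for n
  proof
    have "cmod (h n 0) * (\<Sum>k<N. cmod (mu n 0)^k) \<le> Max ((\<lambda>l. cmod (h n l) * (\<Sum>k<N. cmod (mu n l)^k)) ` {..<q})"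
      using q by (intro Max_ge) auto
    moreover have "0 \<le> cmod (h n 0) * (\<Sum>k<N. cmod (mu n 0)^k)" by (simp add: sum_nonneg)
    ultimately show "0 \<le> spec_norm (U n) * spec_norm (Ui n) * Max ((\<lambda>l. cmod (h n l) * (\<Sum>k<N. cmod (mu n l)^k)) ` {..<q})"
      by (intro mult_nonneg_nonneg spec_norm_nonneg) (rule order_trans)
    show "spec_norm (U n) * spec_norm (Ui n) * Max ((\<lambda>l. cmod (h n l) * (\<Sum>k<N. cmod (mu n l)^k)) ` {..<q}) \<le> B"
      unfolding B_def using n by (intro Max_ge) auto
  qed
  have aF: "adj F \<in> carrier_mat D D" using F unfolding D_def by simp
  have Fd: "F \<in> carrier_mat D D" using F unfolding D_def by simp
  have iso: "nsq (adj F *\<^sub>v v) = nsq v" if "v \<in> carrier_vec D" for v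
    using isometry[OF aF _ that] FF(1) unfolding adj_adj D_def by simp
  define y where "y t = adj F *\<^sub>v w t" for t
  define xt where "xt t = adj F *\<^sub>v x t" for t
  have yc: "y t \<in> carrier_vec D" for t unfolding y_def using aF w[of t] by (simp add: D_def)
  have xtc: "xt t \<in> carrier_vec D" for t unfolding xt_def using aF x[of t] by (simp add: D_def)
  have wF: "w t = F *\<^sub>v y t" for t
  proof -
    have "F *\<^sub>v y t = (F * adj F) *\<^sub>v w t" unfolding y_def
      using assoc_mult_mat_vec[OF Fd aF, of "w t"] w[of t] unfolding D_def by simp
    thus ?thesis using FF(1) w[of t] by simp
  qed
  have xF: "x t = F *\<^sub>v xt t" for t
  proof -
    have "F *\<^sub>v xt t = (F * adj F) *\<^sub>v x t" unfolding xt_def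
      using assoc_mult_mat_vec[OF Fd aF, of "x t"] x[of t] unfolding D_def by simp
    thus ?thesis using FF(1) x[of t] by simp
  qed
  define yb where "yb n t = blk q (y t) n" for n t
  define xb where "xb n t = blk q (xt t) n" for n t
  have per_n: "(\<Sum>t\<le>N. nsq (yb n t)) \<le> B^2 * (\<Sum>t<N. nsq (xb n t))" if n: "n < Nx" for n
  proof -
    have bl: "U n \<in> carrier_mat q q" "Ui n \<in> carrier_mat q q" "U n * Ui n = 1\<^sub>m q"
        "P n \<in> carrier_mat q q" "Hb n \<in> carrier_mat q q"
        "Ui n * P n * U n = mat_diag q (mu n)" "Ui n * Hb n * U n = mat_diag q (h n)"
      using blocks[OF n] by auto
    have sn: "(Suc n) * q \<le> D" unfolding D_def using n by (metis Suc_leI mult.commute mult_le_mono2)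
    have "(\<Sum>t\<le>N. nsq (yb n t)) \<le> (spec_norm (U n) * spec_norm (Ui n) *
     Max ((\<lambda>l. cmod (h n l) * (\<Sum>k<N. cmod (mu n l)^k)) ` {..<q}))^2 * (\<Sum>t<N. nsq (xb n t))"
    proof (rule core_n[OF q bl])
      show "yb n t \<in> carrier_vec q" for t unfolding yb_def by simp
      show "xb n t \<in> carrier_vec q" for t unfolding xb_def by simp
      have idx: "\<And>i. i < q \<Longrightarrow> n*q+i < q*Nx" by (subst mult.commute[of q Nx]) (rule lt_blk[OF n])
      show "yb n 0 = 0\<^sub>v q" unfolding yb_def y_def w0 D_def using aF mult_zero_vec[OF aF] idx
        by (intro eq_vecI) (auto simp: D_def)
      fix t assume t: "t < N"
      have "y (Suc t) = adj F *\<^sub>v (G *\<^sub>v w t) + adj F *\<^sub>v (H *\<^sub>v x t)"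
        unfolding y_def ws[OF t] using aF G H w[of t] x[of t] unfolding D_def
        by (intro mult_add_distrib_mat_vec) auto
      also have "\<dots> = adj F *\<^sub>v (G *\<^sub>v (F *\<^sub>v y t)) + adj F *\<^sub>v (H *\<^sub>v (F *\<^sub>v xt t))"
        by (simp only: wF[symmetric] xF[symmetric])
      finally have ys': "y (Suc t) = adj F *\<^sub>v (G *\<^sub>v (F *\<^sub>v y t)) + adj F *\<^sub>v (H *\<^sub>v (F *\<^sub>v xt t))" .
      have "yb n (Suc t) = blk q (adj F *\<^sub>v (G *\<^sub>v (F *\<^sub>v y t))) n + blk q (adj F *\<^sub>v (H *\<^sub>v (F *\<^sub>v xt t))) n"
        unfolding yb_def ys' using aF sn by (intro blk_add[of _ D]) auto
      also have "\<dots> = P n *\<^sub>v yb n t + Hb n *\<^sub>v xb n t"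
        unfolding yb_def xb_def using hG[OF _ n] hH[OF _ n] yc xtc unfolding D_def by simp
      finally show "yb n (Suc t) = P n *\<^sub>v yb n t + Hb n *\<^sub>v xb n t" .
    qed
    also have "\<dots> \<le> B^2 * (\<Sum>t<N. nsq (xb n t))"
      using Bn[OF n] by (intro mult_right_mono power_mono) (auto simp: sum_nonneg nsq_nonneg)
    finally show ?thesis .
  qed
  have "(\<Sum>t\<le>N. nsq (w t)) = (\<Sum>t\<le>N. nsq (y t))"
    unfolding y_def using iso w unfolding D_def by simp
  also have "\<dots> = (\<Sum>t\<le>N. \<Sum>n<Nx. nsq (yb n t))"
    unfolding yb_def using yc nsq_blk[of _ Nx q] unfolding D_def by (simp add: mult.commute)
  also have "\<dots> = (\<Sum>n<Nx. \<Sum>t\<le>N. nsq (yb n t))" by (rule sum.swap)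
  also have "\<dots> \<le> (\<Sum>n<Nx. B^2 * (\<Sum>t<N. nsq (xb n t)))" using per_n by (intro sum_mono) auto
  also have "\<dots> = B^2 * (\<Sum>t<N. \<Sum>n<Nx. nsq (xb n t))"
    by (simp add: sum_distrib_left[symmetric]) (rule disjI2, rule sum.swap)
  also have "(\<Sum>t<N. \<Sum>n<Nx. nsq (xb n t)) = (\<Sum>t<N. nsq (xt t))"
    unfolding xb_def using xtc nsq_blk[of _ Nx q] unfolding D_def by (simp add: mult.commute)
  also have "\<dots> = (\<Sum>t<N. nsq (x t))"
    unfolding xt_def using iso x unfolding D_def by simp
  finally show ?thesis unfolding B_def .
qed

lemma bidiag_inv:
  assumes G: "G \<in> carrier_mat d d"
  shows "minv (block_bidiag NT G) \<in> carrier_mat ((NT+1)*d) ((NT+1)*d)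
    \<and> block_bidiag NT G * minv (block_bidiag NT G) = 1\<^sub>m ((NT+1)*d)
    \<and> minv (block_bidiag NT G) * block_bidiag NT G = 1\<^sub>m ((NT+1)*d)"
proof -
  let ?n = "(NT+1)*d"
  let ?A = "block_bidiag NT G"
  have Ac: "?A \<in> carrier_mat ?n ?n" by (rule block_bidiag_carrier[OF G])
  have dr: "dim_row G = d" using G by simp
  have up: "?A $$ (i,j) = 0" if ij: "i < j" "j < ?n" for i j
  proof -
    have d0: "d > 0" using ij by (cases d) auto
    have le: "i div d \<le> j div d" using ij by (simp add: div_le_mono)
    have "i div d = j div d \<Longrightarrow> i mod d \<noteq> j mod d"
      using ij by (metis div_mult_mod_eq less_irrefl)
    moreover have "i div d \<noteq> j div d + 1" using le by simp
    ultimately show ?thesis using ij unfolding block_bidiag_def Let_def dr by auto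
  qed
  have diag: "?A $$ (i,i) = 1" if "i < ?n" for i
    using that unfolding block_bidiag_def Let_def dr by auto
  have "det ?A = prod_list (diag_mat ?A)" by (rule det_lower_triangular[OF up Ac]) auto
  also have "diag_mat ?A = map (\<lambda>i. 1) [0..<?n]"
    unfolding diag_mat_def using diag Ac by (intro map_cong) auto
  also have "prod_list (map (\<lambda>i. 1::complex) xs) = 1" for xs :: "nat list" by (induct xs) auto
  finally have "det ?A \<noteq> 0" by simp
  from det_non_zero_imp_unit[OF Ac this, of "()"]
  obtain B where B: "B \<in> carrier_mat ?n ?n" "?A * B = 1\<^sub>m ?n" "B * ?A = 1\<^sub>m ?n"
    unfolding Units_def ring_mat_def by auto
  show ?thesis using minv_props[OF Ac B] by auto
qed

definition acts :: "complex mat \<Rightarrow> nat \<Rightarrow> nat \<Rightarrow> complex mat \<Rightarrow> (nat \<Rightarrow> complex mat) \<Rightarrow> bool" where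
  "acts F q Nx X B \<longleftrightarrow> (\<forall>y\<in>carrier_vec (q*Nx). \<forall>n<Nx. blk q (adj F *\<^sub>v (X *\<^sub>v (F *\<^sub>v y))) n = B n *\<^sub>v blk q y n)"

lemma blk_minus: assumes "dim_vec a = m" "dim_vec b = m" "(Suc t)*d \<le> m"
  shows "blk d (a - b) t = blk d a t - blk d b t"
proof (rule eq_vecI)
  fix r assume "r < dim_vec (blk d a t - blk d b t)"
  hence r: "r < d" by simp
  have "t*d + r < Suc t * d" using r by simp
  hence "t*d + r < m" using assms(3) by linarith
  thus "blk d (a - b) t $ r = (blk d a t - blk d b t) $ r" using r assms by simp
qed simp

context
  fixes F :: "complex mat" and q Nx :: nat
  assumes F: "F \<in> carrier_mat (q*Nx) (q*Nx)" and FF: "F * adj F = 1\<^sub>m (q*Nx)" "adj F * F = 1\<^sub>m (q*Nx)"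
begin

lemma aFc: "adj F \<in> carrier_mat (q*Nx) (q*Nx)" using F by simp

lemma sn: "n < Nx \<Longrightarrow> Suc n * q \<le> q*Nx"
  by (metis Suc_leI mult.commute mult_le_mono2)

lemma acts_bd:
  assumes X: "X \<in> carrier_mat (q*Nx) (q*Nx)" and B: "\<And>n. n < Nx \<Longrightarrow> B n \<in> carrier_mat q q"
    and eq: "adj F * X * F = block_diag q Nx B"
  shows "acts F q Nx X B"
  unfolding acts_def
proof (intro ballI allI impI)
  fix y :: "complex vec" and n assume y: "y \<in> carrier_vec (q*Nx)" and n: "n < Nx"
  have Fy: "F *\<^sub>v y \<in> carrier_vec (q*Nx)" using F y by simp
  have "adj F *\<^sub>v (X *\<^sub>v (F *\<^sub>v y)) = (adj F * X) *\<^sub>v (F *\<^sub>v y)"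
    using assoc_mult_mat_vec[OF aFc X Fy] by simp
  also have "\<dots> = (adj F * X * F) *\<^sub>v y"
    using assoc_mult_mat_vec[OF mult_carrier_mat[OF aFc X] F y] by simp
  finally show "blk q (adj F *\<^sub>v (X *\<^sub>v (F *\<^sub>v y))) n = B n *\<^sub>v blk q y n"
    unfolding eq using block_diag_mult[of y q Nx n B] y n B[OF n] by simp
qed

lemma FadjF_vec: "v \<in> carrier_vec (q*Nx) \<Longrightarrow> F *\<^sub>v (adj F *\<^sub>v v) = v"
proof -
  assume v: "v \<in> carrier_vec (q*Nx)"
  have "F *\<^sub>v (adj F *\<^sub>v v) = (F * adj F) *\<^sub>v v" using assoc_mult_mat_vec[OF F aFc v] by simp
  thus ?thesis using FF(1) v by simp
qed

lemma adjFF_vec: "v \<in> carrier_vec (q*Nx) \<Longrightarrow> adj F *\<^sub>v (F *\<^sub>v v) = v"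
proof -
  assume v: "v \<in> carrier_vec (q*Nx)"
  have "adj F *\<^sub>v (F *\<^sub>v v) = (adj F * F) *\<^sub>v v" using assoc_mult_mat_vec[OF aFc F v] by simp
  thus ?thesis using FF(2) v by simp
qed

lemma acts_mult:
  assumes X: "X \<in> carrier_mat (q*Nx) (q*Nx)" and Y: "Y \<in> carrier_mat (q*Nx) (q*Nx)"
    and B: "\<And>n. n < Nx \<Longrightarrow> B n \<in> carrier_mat q q" and C: "\<And>n. n < Nx \<Longrightarrow> C n \<in> carrier_mat q q"
    and aX: "acts F q Nx X B" and aY: "acts F q Nx Y C"
  shows "acts F q Nx (X * Y) (\<lambda>n. B n * C n)"
  unfolding acts_def
proof (intro ballI allI impI)
  fix y :: "complex vec" and n assume y: "y \<in> carrier_vec (q*Nx)" and n: "n < Nx"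
  define y' where "y' = adj F *\<^sub>v (Y *\<^sub>v (F *\<^sub>v y))"
  have y'c: "y' \<in> carrier_vec (q*Nx)" unfolding y'_def using Y F y by (intro mult_mat_vec_carrier[OF aFc]) auto
  have "(X * Y) *\<^sub>v (F *\<^sub>v y) = X *\<^sub>v (Y *\<^sub>v (F *\<^sub>v y))"
    using X Y F y by (intro assoc_mult_mat_vec) auto
  also have "Y *\<^sub>v (F *\<^sub>v y) = F *\<^sub>v y'" unfolding y'_def using Y F y by (intro FadjF_vec[symmetric]) auto
  finally have "blk q (adj F *\<^sub>v ((X * Y) *\<^sub>v (F *\<^sub>v y))) n = B n *\<^sub>v blk q y' n"
    using aX y'c n unfolding acts_def by simp
  also have "blk q y' n = C n *\<^sub>v blk q y n" using aY y n unfolding acts_def y'_def by simp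
  also have "B n *\<^sub>v (C n *\<^sub>v blk q y n) = (B n * C n) *\<^sub>v blk q y n"
    using B[OF n] C[OF n] by (intro assoc_mult_mat_vec[symmetric]) auto
  finally show "blk q (adj F *\<^sub>v ((X * Y) *\<^sub>v (F *\<^sub>v y))) n = (B n * C n) *\<^sub>v blk q y n" .
qed

lemma acts_minus:
  assumes X: "X \<in> carrier_mat (q*Nx) (q*Nx)" and Y: "Y \<in> carrier_mat (q*Nx) (q*Nx)"
    and B: "\<And>n. n < Nx \<Longrightarrow> B n \<in> carrier_mat q q" and C: "\<And>n. n < Nx \<Longrightarrow> C n \<in> carrier_mat q q"
    and aX: "acts F q Nx X B" and aY: "acts F q Nx Y C"
  shows "acts F q Nx (X - Y) (\<lambda>n. B n - C n)"
  unfolding acts_def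
proof (intro ballI allI impI)
  fix y :: "complex vec" and n assume y: "y \<in> carrier_vec (q*Nx)" and n: "n < Nx"
  have Fy: "F *\<^sub>v y \<in> carrier_vec (q*Nx)" using F y by simp
  have "adj F *\<^sub>v ((X - Y) *\<^sub>v (F *\<^sub>v y)) = adj F *\<^sub>v (X *\<^sub>v (F *\<^sub>v y) - Y *\<^sub>v (F *\<^sub>v y))"
    using X Y Fy by (simp add: minus_mult_distrib_mat_vec)
  also have "\<dots> = adj F *\<^sub>v (X *\<^sub>v (F *\<^sub>v y)) - adj F *\<^sub>v (Y *\<^sub>v (F *\<^sub>v y))"
    using aFc X Y Fy by (intro mult_minus_distrib_mat_vec) auto
  finally have "blk q (adj F *\<^sub>v ((X - Y) *\<^sub>v (F *\<^sub>v y))) n =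
      blk q (adj F *\<^sub>v (X *\<^sub>v (F *\<^sub>v y))) n - blk q (adj F *\<^sub>v (Y *\<^sub>v (F *\<^sub>v y))) n"
    using aFc sn[OF n] by (simp add: blk_minus[of _ "q*Nx"])
  also have "\<dots> = B n *\<^sub>v blk q y n - C n *\<^sub>v blk q y n" using aX aY y n unfolding acts_def by simp
  also have "\<dots> = (B n - C n) *\<^sub>v blk q y n" using B[OF n] C[OF n] by (intro minus_mult_distrib_mat_vec[symmetric]) auto
  finally show "blk q (adj F *\<^sub>v ((X - Y) *\<^sub>v (F *\<^sub>v y))) n = (B n - C n) *\<^sub>v blk q y n" .
qed

lemma acts_one: "acts F q Nx (1\<^sub>m (q*Nx)) (\<lambda>n. 1\<^sub>m q)"
  unfolding acts_def
proof (intro ballI allI impI)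
  fix y :: "complex vec" and n assume y: "y \<in> carrier_vec (q*Nx)" and n: "n < Nx"
  have "adj F *\<^sub>v (1\<^sub>m (q*Nx) *\<^sub>v (F *\<^sub>v y)) = y" using F y adjFF_vec[OF y] by simp
  thus "blk q (adj F *\<^sub>v (1\<^sub>m (q*Nx) *\<^sub>v (F *\<^sub>v y))) n = 1\<^sub>m q *\<^sub>v blk q y n" by simp
qed

lemma acts_pow:
  assumes X: "X \<in> carrier_mat (q*Nx) (q*Nx)" and B: "\<And>n. n < Nx \<Longrightarrow> B n \<in> carrier_mat q q"
    and aX: "acts F q Nx X B"
  shows "acts F q Nx (X ^\<^sub>m m) (\<lambda>n. B n ^\<^sub>m m)"
proof (induction m)
  case 0
  show ?case unfolding acts_def
  proof (intro ballI allI impI)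
    fix y :: "complex vec" and n assume y: "y \<in> carrier_vec (q*Nx)" and n: "n < Nx"
    have "blk q (adj F *\<^sub>v (1\<^sub>m (q*Nx) *\<^sub>v (F *\<^sub>v y))) n = 1\<^sub>m q *\<^sub>v blk q y n"
      using acts_one y n unfolding acts_def by blast
    thus "blk q (adj F *\<^sub>v ((X ^\<^sub>m 0) *\<^sub>v (F *\<^sub>v y))) n = (B n ^\<^sub>m 0) *\<^sub>v blk q y n"
      using X B[OF n] by simp
  qed
next
  case (Suc m)
  show ?case using acts_mult[OF pow_carrier_mat[OF X] X _ B Suc aX] B by simp
qed

end

context
  fixes U Ui :: "complex mat" and q :: nat
  assumes U: "U \<in> carrier_mat q q" and Ui: "Ui \<in> carrier_mat q q"
    and UUi: "U * Ui = 1\<^sub>m q" and UiU: "Ui * U = 1\<^sub>m q"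
begin

lemma dg_mult:
  assumes B: "B \<in> carrier_mat q q" and C: "C \<in> carrier_mat q q"
    and dB: "Ui * B * U = mat_diag q f" and dC: "Ui * C * U = mat_diag q g"
  shows "Ui * (B * C) * U = mat_diag q (\<lambda>i. f i * g i)"
proof -
  have "U * (Ui * C * U) = U * (Ui * (C * U))" using assoc_mult_mat[OF Ui C U] by simp
  also have "\<dots> = (U * Ui) * (C * U)" using assoc_mult_mat[OF U Ui mult_carrier_mat[OF C U]] by simp
  also have "\<dots> = C * U" using UUi C U by simp
  finally have e2: "C * U = U * (Ui * C * U)" by simp
  have "Ui * (B * C) * U = (Ui * B) * C * U" using assoc_mult_mat[OF Ui B C] by simp
  also have "\<dots> = (Ui * B) * (C * U)" using assoc_mult_mat[OF mult_carrier_mat[OF Ui B] C U] by simp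
  also have "\<dots> = (Ui * B) * (U * (Ui * C * U))" using e2 by simp
  also have "\<dots> = (Ui * B * U) * (Ui * C * U)"
    using assoc_mult_mat[OF mult_carrier_mat[OF Ui B] U mult_carrier_mat[OF mult_carrier_mat[OF Ui C] U]] by simp
  also have "\<dots> = mat_diag q (\<lambda>i. f i * g i)" unfolding dB dC by simp
  finally show ?thesis .
qed

lemma dg_minus:
  assumes B: "B \<in> carrier_mat q q" and C: "C \<in> carrier_mat q q"
    and dB: "Ui * B * U = mat_diag q f" and dC: "Ui * C * U = mat_diag q g"
  shows "Ui * (B - C) * U = mat_diag q (\<lambda>i. f i - g i)"
proof -
  have "Ui * (B - C) * U = (Ui * B - Ui * C) * U" using mult_minus_distrib_mat[OF Ui B C] by simp
  also have "\<dots> = Ui * B * U - Ui * C * U"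
    by (rule minus_mult_distrib_mat[OF mult_carrier_mat[OF Ui B] mult_carrier_mat[OF Ui C] U])
  also have "\<dots> = mat_diag q (\<lambda>i. f i - g i)" unfolding dB dC
    by (rule eq_matI) (auto simp: mat_diag_def)
  finally show ?thesis .
qed

lemma dg_pow:
  assumes B: "B \<in> carrier_mat q q" and dB: "Ui * B * U = mat_diag q f"
  shows "Ui * (B ^\<^sub>m m) * U = mat_diag q (\<lambda>i. f i ^ m)"
proof (induction m)
  case 0
  have "Ui * (B ^\<^sub>m 0) * U = Ui * U" using B Ui by simp
  also have "\<dots> = mat_diag q (\<lambda>i. f i ^ 0)" unfolding UiU by (rule eq_matI) (auto simp: mat_diag_def)
  finally show ?case .
next
  case (Suc m)
  have "Ui * (B ^\<^sub>m Suc m) * U = Ui * (B ^\<^sub>m m * B) * U" by simp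
  also have "\<dots> = mat_diag q (\<lambda>i. f i ^ m * f i)" by (rule dg_mult[OF pow_carrier_mat[OF B] B Suc dB])
  finally show ?case by (simp add: mult.commute)
qed

end

lemma Bnonneg:
  fixes U Ui :: "nat \<Rightarrow> complex mat" and h mu :: "nat \<Rightarrow> nat \<Rightarrow> complex"
  assumes "q > 0" "Nx > 0"
  shows "0 \<le> Max ((\<lambda>n. spec_norm (U n) * spec_norm (Ui n) *
      Max ((\<lambda>l. cmod (h n l) * (\<Sum>k<N. cmod (mu n l)^k)) ` {..<q})) ` {..<Nx})"
proof -
  have "cmod (h 0 0) * (\<Sum>k<N. cmod (mu 0 0)^k) \<le> Max ((\<lambda>l. cmod (h 0 l) * (\<Sum>k<N. cmod (mu 0 l)^k)) ` {..<q})"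
    using assms by (intro Max_ge) auto
  moreover have "0 \<le> cmod (h 0 0) * (\<Sum>k<N. cmod (mu 0 0)^k)" by (simp add: sum_nonneg)
  ultimately have "0 \<le> spec_norm (U 0) * spec_norm (Ui 0) * Max ((\<lambda>l. cmod (h 0 l) * (\<Sum>k<N. cmod (mu 0 l)^k)) ` {..<q})"
    by (intro mult_nonneg_nonneg spec_norm_nonneg) (rule order_trans)
  also have "\<dots> \<le> Max ((\<lambda>n. spec_norm (U n) * spec_norm (Ui n) *
      Max ((\<lambda>l. cmod (h n l) * (\<Sum>k<N. cmod (mu n l)^k)) ` {..<q})) ` {..<Nx})"
    using assms by (intro Max_ge) auto
  finally show ?thesis .
qed

lemma geom: "cmod z \<noteq> 1 \<Longrightarrow> (\<Sum>k<N. cmod z ^ k) = (1 - cmod z ^ N) / (1 - cmod z)"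
  by (simp add: sum_gp_strict)

lemma vec_alg:
  fixes a b c g p :: "complex vec"
  assumes "a \<in> carrier_vec d" "b \<in> carrier_vec d" "c \<in> carrier_vec d" "g \<in> carrier_vec d" "p \<in> carrier_vec d"
    and "a - b = (c - g) - (c - p)"
  shows "a = b + (p - g)"
proof (rule eq_vecI)
  fix i assume "i < dim_vec (b + (p - g))"
  hence i: "i < d" using assms by simp
  have h: "(a - b) $ i = ((c - g) - (c - p)) $ i" using assms(6) by simp
  have h1: "(a - b) $ i = a $ i - b $ i" using assms(1-5) i by simp
  have h2: "((c - g) - (c - p)) $ i = (c $ i - g $ i) - (c $ i - p $ i)" using assms(1-5) i by simp
  have h3: "(b + (p - g)) $ i = b $ i + (p $ i - g $ i)" using assms(1-5) i by simp
  have X: "(c $ i - g $ i) - (c $ i - p $ i) = p $ i - g $ i" by simp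
  have "a $ i - b $ i = p $ i - g $ i" using h h1 h2 X by simp
  hence "a $ i = (p $ i - g $ i) + b $ i" by (simp only: diff_eq_eq)
  thus "a $ i = (b + (p - g)) $ i" unfolding h3 by (simp only: add.commute)
qed (use assms in simp)

lemma vec_self_minus: "(a :: complex vec) \<in> carrier_vec d \<Longrightarrow> a - a = 0\<^sub>v d"
  by (intro eq_vecI) auto

lemma E_rec:
  assumes G: "G \<in> carrier_mat d d" and K: "K \<in> carrier_mat d d" and v: "v \<in> carrier_vec ((NT+1)*d)"
  shows "blk d ((1\<^sub>m ((NT+1)*d) - minv (block_bidiag NT G) * block_bidiag NT K) *\<^sub>v v) 0 = 0\<^sub>v d
    \<and> (\<forall>t<NT. blk d ((1\<^sub>m ((NT+1)*d) - minv (block_bidiag NT G) * block_bidiag NT K) *\<^sub>v v) (Suc t) =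
          G *\<^sub>v blk d ((1\<^sub>m ((NT+1)*d) - minv (block_bidiag NT G) * block_bidiag NT K) *\<^sub>v v) t
          + (K - G) *\<^sub>v blk d v t)"
proof -
  let ?n = "(NT+1)*d"
  define Ac where "Ac = block_bidiag NT G"
  define As where "As = block_bidiag NT K"
  define L where "L = minv Ac"
  have Acc: "Ac \<in> carrier_mat ?n ?n" unfolding Ac_def by (rule block_bidiag_carrier[OF G])
  have Asc: "As \<in> carrier_mat ?n ?n" unfolding As_def by (rule block_bidiag_carrier[OF K])
  have Lc: "L \<in> carrier_mat ?n ?n" and AL: "Ac * L = 1\<^sub>m ?n"
    using bidiag_inv[OF G, of NT] unfolding L_def Ac_def by auto
  define e where "e = (1\<^sub>m ?n - L * As) *\<^sub>v v"
  have Asv: "As *\<^sub>v v \<in> carrier_vec ?n" using Asc v by simp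
  have "e = 1\<^sub>m ?n *\<^sub>v v - (L * As) *\<^sub>v v" unfolding e_def
    by (rule minus_mult_distrib_mat_vec[OF one_carrier_mat mult_carrier_mat[OF Lc Asc] v])
  also have "\<dots> = v - L *\<^sub>v (As *\<^sub>v v)" using v assoc_mult_mat_vec[OF Lc Asc v] by simp
  finally have e: "e = v - L *\<^sub>v (As *\<^sub>v v)" .
  have ec: "e \<in> carrier_vec ?n" unfolding e using v Lc Asv by simp
  have "Ac *\<^sub>v e = Ac *\<^sub>v v - Ac *\<^sub>v (L *\<^sub>v (As *\<^sub>v v))" unfolding e
    by (rule mult_minus_distrib_mat_vec[OF Acc v]) (use Lc Asv in simp)
  also have "Ac *\<^sub>v (L *\<^sub>v (As *\<^sub>v v)) = (Ac * L) *\<^sub>v (As *\<^sub>v v)"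
    using assoc_mult_mat_vec[OF Acc Lc Asv] by simp
  also have "\<dots> = As *\<^sub>v v" unfolding AL using Asv by simp
  finally have Ae: "Ac *\<^sub>v e = Ac *\<^sub>v v - As *\<^sub>v v" .
  have key: "blk d (Ac *\<^sub>v e) t = blk d (Ac *\<^sub>v v) t - blk d (As *\<^sub>v v) t" if t: "t \<le> NT" for t
  proof -
    have "Suc t * d \<le> ?n" using t by (intro mult_le_mono1) simp
    thus ?thesis unfolding Ae using Acc Asc v by (intro blk_minus[of _ ?n]) auto
  qed
  have bA: "blk d (Ac *\<^sub>v x) t = (if t = 0 then blk d x 0 else blk d x t - G *\<^sub>v blk d x (t-1))"
    if "x \<in> carrier_vec ?n" "t \<le> NT" for x t
    unfolding Ac_def by (rule block_bidiag_mult[OF G that])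
  have bS: "blk d (As *\<^sub>v x) t = (if t = 0 then blk d x 0 else blk d x t - K *\<^sub>v blk d x (t-1))"
    if "x \<in> carrier_vec ?n" "t \<le> NT" for x t
    unfolding As_def by (rule block_bidiag_mult[OF K that])
  have e0: "blk d e 0 = 0\<^sub>v d"
    using key[of 0] bA[OF ec, of 0] bA[OF v, of 0] bS[OF v, of 0] vec_self_minus[of "blk d v 0" d] by simp
  have es: "blk d e (Suc t) = G *\<^sub>v blk d e t + (K - G) *\<^sub>v blk d v t" if t: "t < NT" for t
  proof -
    have "blk d e (Suc t) - G *\<^sub>v blk d e t = (blk d v (Suc t) - G *\<^sub>v blk d v t) - (blk d v (Suc t) - K *\<^sub>v blk d v t)"
      using key[of "Suc t"] bA[OF ec, of "Suc t"] bA[OF v, of "Suc t"] bS[OF v, of "Suc t"] t by simp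
    hence "blk d e (Suc t) = G *\<^sub>v blk d e t + (K *\<^sub>v blk d v t - G *\<^sub>v blk d v t)"
      using G K by (intro vec_alg[of _ d]) auto
    also have "K *\<^sub>v blk d v t - G *\<^sub>v blk d v t = (K - G) *\<^sub>v blk d v t"
      by (rule minus_mult_distrib_mat_vec[OF K G, symmetric]) simp
    finally show ?thesis .
  qed
  show ?thesis using e0 es unfolding e_def L_def Ac_def As_def by auto
qed

lemma S_rec:
  assumes K: "K \<in> carrier_mat d d" and v: "v \<in> carrier_vec ((NT+1)*d)"
  shows "blk d ((1\<^sub>m ((NT+1)*d) - block_bidiag NT K) *\<^sub>v v) 0 = 0\<^sub>v d
    \<and> (\<forall>t<NT. blk d ((1\<^sub>m ((NT+1)*d) - block_bidiag NT K) *\<^sub>v v) (Suc t) = K *\<^sub>v blk d v t)"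
proof -
  let ?n = "(NT+1)*d"
  define As where "As = block_bidiag NT K"
  have Asc: "As \<in> carrier_mat ?n ?n" unfolding As_def by (rule block_bidiag_carrier[OF K])
  have u: "(1\<^sub>m ?n - As) *\<^sub>v v = v - As *\<^sub>v v"
    using minus_mult_distrib_mat_vec[OF one_carrier_mat Asc v] v by simp
  have key: "blk d ((1\<^sub>m ?n - As) *\<^sub>v v) t = blk d v t - blk d (As *\<^sub>v v) t" if t: "t \<le> NT" for t
  proof -
    have "Suc t * d \<le> ?n" using t by (intro mult_le_mono1) simp
    thus ?thesis unfolding u using Asc v by (intro blk_minus[of _ ?n]) auto
  qed
  have bS: "blk d (As *\<^sub>v v) t = (if t = 0 then blk d v 0 else blk d v t - K *\<^sub>v blk d v (t-1))"
    if "t \<le> NT" for t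
    unfolding As_def by (rule block_bidiag_mult[OF K v that])
  have z: "blk d ((1\<^sub>m ?n - As) *\<^sub>v v) 0 = 0\<^sub>v d"
    using key[of 0] bS[of 0] vec_self_minus[of "blk d v 0" d] by simp
  have s: "blk d ((1\<^sub>m ?n - As) *\<^sub>v v) (Suc t) = K *\<^sub>v blk d v t" if t: "t < NT" for t
  proof (rule eq_vecI)
    fix i assume "i < dim_vec (K *\<^sub>v blk d v t)"
    hence i: "i < d" using K by simp
    show "blk d ((1\<^sub>m ?n - As) *\<^sub>v v) (Suc t) $ i = (K *\<^sub>v blk d v t) $ i"
      using key[of "Suc t"] bS[of "Suc t"] t i K by simp
  qed (use K in simp)
  show ?thesis using z s unfolding As_def by auto
qed

theorem mainTheorem1:
  fixes q Nx NT m :: nat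
    and Phi Phic F :: "complex mat"
    and Phit Phict U :: "nat \<Rightarrow> complex mat"
    and lam mu :: "nat \<Rightarrow> nat \<Rightarrow> complex"
  assumes "q \<ge> 1" "Nx \<ge> 1" "NT \<ge> 1" "m \<ge> 1"
    and "Phi \<in> carrier_mat (q*Nx) (q*Nx)" "Phic \<in> carrier_mat (q*Nx) (q*Nx)"
    and "F \<in> carrier_mat (q*Nx) (q*Nx)"
    and "F * adj F = 1\<^sub>m (q*Nx)" "adj F * F = 1\<^sub>m (q*Nx)"
    and "\<forall>n<Nx. Phit n \<in> carrier_mat q q \<and> Phict n \<in> carrier_mat q q"
    and "minv F * Phi * F = block_diag q Nx Phit"
    and "minv F * Phic * F = block_diag q Nx Phict"
    and "\<forall>n<Nx. U n \<in> carrier_mat q q \<and> invertible_mat (U n)"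
    and "\<forall>n<Nx. minv (U n) * Phit n * U n = mat_diag q (lam n)"
    and "\<forall>n<Nx. minv (U n) * Phict n * U n = mat_diag q (mu n)"
    and "\<forall>n<Nx. \<forall>l<q. cmod (mu n l) \<noteq> 1"
  shows
    "spec_norm (1\<^sub>m ((NT+1)*(q*Nx)) - minv (block_bidiag NT Phic) * block_bidiag NT (Phi ^\<^sub>m m))
       \<le> Max ((\<lambda>n. kappa (U n) * Max ((\<lambda>l. cmod (lam n l ^ m - mu n l)
             * (1 - cmod (mu n l) ^ NT) / (1 - cmod (mu n l))) ` {..<q})) ` {..<Nx})
     \<and>
     spec_norm ((1\<^sub>m ((NT+1)*(q*Nx)) - minv (block_bidiag NT Phic) * block_bidiag NT (Phi ^\<^sub>m m))
                * (1\<^sub>m ((NT+1)*(q*Nx)) - block_bidiag NT (Phi ^\<^sub>m m)))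
       \<le> Max ((\<lambda>n. kappa (U n) * Max ((\<lambda>l. cmod (lam n l ^ m - mu n l) * cmod (lam n l) ^ m
             * (1 - cmod (mu n l) ^ (NT - 1)) / (1 - cmod (mu n l))) ` {..<q})) ` {..<Nx})"
proof -
  note A = assms
  have q: "q > 0" using A(1) by simp
  have Nx: "Nx > 0" using A(2) by simp
  have F: "F \<in> carrier_mat (q*Nx) (q*Nx)" by (rule A(7))
  have FF1: "F * adj F = 1\<^sub>m (q*Nx)" by (rule A(8))
  have FF2: "adj F * F = 1\<^sub>m (q*Nx)" by (rule A(9))
  have Phi: "Phi \<in> carrier_mat (q*Nx) (q*Nx)" by (rule A(5))
  have Phic: "Phic \<in> carrier_mat (q*Nx) (q*Nx)" by (rule A(6))
  have Phim: "Phi ^\<^sub>m m \<in> carrier_mat (q*Nx) (q*Nx)" using Phi by simp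
  have H1: "Phi ^\<^sub>m m - Phic \<in> carrier_mat (q*Nx) (q*Nx)" using Phim Phic by (simp add: minus_carrier_mat)
  have H2: "(Phi ^\<^sub>m m - Phic) * Phi ^\<^sub>m m \<in> carrier_mat (q*Nx) (q*Nx)" using H1 Phim by simp
  have Pt: "\<And>n. n < Nx \<Longrightarrow> Phit n \<in> carrier_mat q q" using A(10) by auto
  have Pct: "\<And>n. n < Nx \<Longrightarrow> Phict n \<in> carrier_mat q q" using A(10) by auto
  have Ptm: "\<And>n. n < Nx \<Longrightarrow> Phit n ^\<^sub>m m \<in> carrier_mat q q" using Pt by simp
  have Hb1: "\<And>n. n < Nx \<Longrightarrow> Phit n ^\<^sub>m m - Phict n \<in> carrier_mat q q"
    using Ptm Pct by (simp add: minus_carrier_mat)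
  have Hb2: "\<And>n. n < Nx \<Longrightarrow> (Phit n ^\<^sub>m m - Phict n) * Phit n ^\<^sub>m m \<in> carrier_mat q q"
    using Hb1 Ptm by (meson mult_carrier_mat)
  have mF: "minv F = adj F" by (rule minv_eq[OF F adj_carrier[OF F] FF1 FF2])
  have bdPhi: "adj F * Phi * F = block_diag q Nx Phit" using A(11) unfolding mF .
  have bdPhic: "adj F * Phic * F = block_diag q Nx Phict" using A(12) unfolding mF .
  define Ui where "Ui n = minv (U n)" for n
  have Uc: "\<And>n. n < Nx \<Longrightarrow> U n \<in> carrier_mat q q" using A(13) by auto
  have Uip: "\<And>n. n < Nx \<Longrightarrow> Ui n \<in> carrier_mat q q \<and> U n * Ui n = 1\<^sub>m q \<and> Ui n * U n = 1\<^sub>m q"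
    unfolding Ui_def using A(13) invertible_minv by blast
  have aPhi: "acts F q Nx Phi Phit" by (rule acts_bd[OF F FF1 FF2 Phi Pt bdPhi])
  have aPhic: "acts F q Nx Phic Phict" by (rule acts_bd[OF F FF1 FF2 Phic Pct bdPhic])
  have aPm: "acts F q Nx (Phi ^\<^sub>m m) (\<lambda>n. Phit n ^\<^sub>m m)" by (rule acts_pow[OF F FF1 FF2 Phi Pt aPhi])
  have aH1: "acts F q Nx (Phi ^\<^sub>m m - Phic) (\<lambda>n. Phit n ^\<^sub>m m - Phict n)"
    by (rule acts_minus[OF F FF1 FF2 Phim Phic Ptm Pct aPm aPhic])
  have aH2: "acts F q Nx ((Phi ^\<^sub>m m - Phic) * Phi ^\<^sub>m m) (\<lambda>n. (Phit n ^\<^sub>m m - Phict n) * Phit n ^\<^sub>m m)"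
    by (rule acts_mult[OF F FF1 FF2 H1 Phim Hb1 Ptm aH1 aPm])
  have dg: "Ui n * Phict n * U n = mat_diag q (mu n)
      \<and> Ui n * (Phit n ^\<^sub>m m - Phict n) * U n = mat_diag q (\<lambda>i. lam n i ^ m - mu n i)
      \<and> Ui n * ((Phit n ^\<^sub>m m - Phict n) * Phit n ^\<^sub>m m) * U n = mat_diag q (\<lambda>i. (lam n i ^ m - mu n i) * lam n i ^ m)"
    if n: "n < Nx" for n
  proof -
    have U: "U n \<in> carrier_mat q q" by (rule Uc[OF n])
    have Ui: "Ui n \<in> carrier_mat q q" "U n * Ui n = 1\<^sub>m q" "Ui n * U n = 1\<^sub>m q" using Uip[OF n] by auto
    have dl: "Ui n * Phit n * U n = mat_diag q (lam n)" using A(14) n unfolding Ui_def by auto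
    have dm: "Ui n * Phict n * U n = mat_diag q (mu n)" using A(15) n unfolding Ui_def by auto
    have dp: "Ui n * (Phit n ^\<^sub>m m) * U n = mat_diag q (\<lambda>i. lam n i ^ m)"
      by (rule dg_pow[OF U Ui Pt[OF n] dl])
    have d1: "Ui n * (Phit n ^\<^sub>m m - Phict n) * U n = mat_diag q (\<lambda>i. lam n i ^ m - mu n i)"
      by (rule dg_minus[OF U Ui Ptm[OF n] Pct[OF n] dp dm])
    have d2: "Ui n * ((Phit n ^\<^sub>m m - Phict n) * Phit n ^\<^sub>m m) * U n = mat_diag q (\<lambda>i. (lam n i ^ m - mu n i) * lam n i ^ m)"
      by (rule dg_mult[OF U Ui Hb1[OF n] Ptm[OF n] d1 dp])
    show ?thesis using dm d1 d2 by simp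
  qed
  have geomq: "c * (\<Sum>k<N. cmod (mu n l) ^ k) = c * (1 - cmod (mu n l) ^ N) / (1 - cmod (mu n l))"
    if "n < Nx" "l < q" for n l N and c :: real
    using geom[of "mu n l" N] A(16) that by simp
  let ?DD = "(NT+1)*(q*Nx)"
  have Ac: "minv (block_bidiag NT Phic) \<in> carrier_mat ?DD ?DD" using bidiag_inv[OF Phic, of NT] by auto
  have Asc: "block_bidiag NT (Phi ^\<^sub>m m) \<in> carrier_mat ?DD ?DD" by (rule block_bidiag_carrier[OF Phim])
  define E where "E = 1\<^sub>m ?DD - minv (block_bidiag NT Phic) * block_bidiag NT (Phi ^\<^sub>m m)"
  have Ec: "E \<in> carrier_mat ?DD ?DD" unfolding E_def using Ac Asc by (simp add: minus_carrier_mat)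
  define S where "S = 1\<^sub>m ?DD - block_bidiag NT (Phi ^\<^sub>m m)"
  have Sc: "S \<in> carrier_mat ?DD ?DD" unfolding S_def using Asc by (simp add: minus_carrier_mat)
  define B1 where "B1 = Max ((\<lambda>n. spec_norm (U n) * spec_norm (Ui n) *
      Max ((\<lambda>l. cmod (lam n l ^ m - mu n l) * (\<Sum>k<NT. cmod (mu n l)^k)) ` {..<q})) ` {..<Nx})"
  define B2 where "B2 = Max ((\<lambda>n. spec_norm (U n) * spec_norm (Ui n) *
      Max ((\<lambda>l. cmod ((lam n l ^ m - mu n l) * lam n l ^ m) * (\<Sum>k<NT - 1. cmod (mu n l)^k)) ` {..<q})) ` {..<Nx})"
  have B1nn: "B1 \<ge> 0" unfolding B1_def by (rule Bnonneg[OF q Nx])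
  have B2nn: "B2 \<ge> 0" unfolding B2_def by (rule Bnonneg[OF q Nx])
  have hG: "\<And>y n. y \<in> carrier_vec (q*Nx) \<Longrightarrow> n < Nx \<Longrightarrow> blk q (adj F *\<^sub>v (Phic *\<^sub>v (F *\<^sub>v y))) n = Phict n *\<^sub>v blk q y n"
    using aPhic unfolding acts_def by blast
  have hH1: "\<And>y n. y \<in> carrier_vec (q*Nx) \<Longrightarrow> n < Nx \<Longrightarrow> blk q (adj F *\<^sub>v ((Phi ^\<^sub>m m - Phic) *\<^sub>v (F *\<^sub>v y))) n = (Phit n ^\<^sub>m m - Phict n) *\<^sub>v blk q y n"
    using aH1 unfolding acts_def by blast
  have hH2: "\<And>y n. y \<in> carrier_vec (q*Nx) \<Longrightarrow> n < Nx \<Longrightarrow> blk q (adj F *\<^sub>v (((Phi ^\<^sub>m m - Phic) * Phi ^\<^sub>m m) *\<^sub>v (F *\<^sub>v y))) n = ((Phit n ^\<^sub>m m - Phict n) * Phit n ^\<^sub>m m) *\<^sub>v blk q y n"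
    using aH2 unfolding acts_def by blast
  have nsqv: "nsq v \<le> 1" if "vnorm2 v \<le> 1" for v using that unfolding vnorm2_nsq by (metis real_sqrt_le_1_iff)
  have fin: "vnorm2 e \<le> B" if "nsq e \<le> B^2 * s" "s \<le> 1" "B \<ge> 0" for e B s
  proof -
    have "nsq e \<le> B^2" using that by (smt (verit) mult_left_le nsq_nonneg zero_le_power2)
    hence "sqrt (nsq e) \<le> sqrt (B^2)" by (rule real_sqrt_le_mono)
    thus ?thesis unfolding vnorm2_nsq using that(3) by simp
  qed
  have part1: "vnorm2 (E *\<^sub>v v) \<le> B1" if v: "v \<in> carrier_vec ?DD" and vn: "vnorm2 v \<le> 1" for v
  proof -
    define w where "w t = blk (q*Nx) (E *\<^sub>v v) t" for t
    define x where "x t = blk (q*Nx) v t" for t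
    have wc: "w t \<in> carrier_vec (q*Nx)" for t by (simp add: w_def)
    have xc: "x t \<in> carrier_vec (q*Nx)" for t by (simp add: x_def)
    have rec: "w 0 = 0\<^sub>v (q*Nx) \<and> (\<forall>t<NT. w (Suc t) = Phic *\<^sub>v w t + (Phi ^\<^sub>m m - Phic) *\<^sub>v x t)"
      unfolding w_def x_def E_def using E_rec[OF Phic Phim v] .
    have "(\<Sum>t\<le>NT. nsq (w t)) \<le> B1^2 * (\<Sum>t<NT. nsq (x t))"
      unfolding B1_def
    proof (rule core_full[OF q Nx F FF1 FF2 Phic H1 hG hH1])
      fix n assume n: "n < Nx"
      show "U n \<in> carrier_mat q q \<and> Ui n \<in> carrier_mat q q \<and> U n * Ui n = 1\<^sub>m q \<and>
        Phict n \<in> carrier_mat q q \<and> (Phit n ^\<^sub>m m - Phict n) \<in> carrier_mat q q \<and>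
        Ui n * Phict n * U n = mat_diag q (mu n) \<and>
        Ui n * (Phit n ^\<^sub>m m - Phict n) * U n = mat_diag q (\<lambda>i. lam n i ^ m - mu n i)"
        using Uc[OF n] Uip[OF n] Pct[OF n] Hb1[OF n] dg[OF n] by auto
    qed (use rec wc xc in auto)
    also have "(\<Sum>t<NT. nsq (x t)) \<le> (\<Sum>t<NT+1. nsq (x t))" by (intro sum_mono2) (auto simp: nsq_nonneg)
    also have "\<dots> = nsq v" unfolding x_def using nsq_blk[of v "NT+1" "q*Nx"] v by simp
    finally have a: "(\<Sum>t\<le>NT. nsq (w t)) \<le> B1^2 * nsq v" by (simp add: mult_left_mono)
    have "nsq (E *\<^sub>v v) = (\<Sum>t<NT+1. nsq (w t))" unfolding w_def using nsq_blk[of "E *\<^sub>v v" "NT+1" "q*Nx"] Ec by simp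
    also have "\<dots> = (\<Sum>t\<le>NT. nsq (w t))" by (simp add: lessThan_Suc_atMost)
    finally have "nsq (E *\<^sub>v v) \<le> B1^2 * nsq v" using a by simp
    thus ?thesis using fin nsqv[OF vn] B1nn by blast
  qed
  have part2: "vnorm2 ((E * S) *\<^sub>v v) \<le> B2" if v: "v \<in> carrier_vec ?DD" and vn: "vnorm2 v \<le> 1" for v
  proof -
    define u where "u = S *\<^sub>v v"
    have uc: "u \<in> carrier_vec ?DD" unfolding u_def using Sc v by simp
    have ES: "(E * S) *\<^sub>v v = E *\<^sub>v u" unfolding u_def by (rule assoc_mult_mat_vec[OF Ec Sc v])
    define x where "x t = blk (q*Nx) v t" for t
    have xc: "x t \<in> carrier_vec (q*Nx)" for t by (simp add: x_def)
    define w2 where "w2 t = blk (q*Nx) (E *\<^sub>v u) t" for t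
    have srec: "blk (q*Nx) u 0 = 0\<^sub>v (q*Nx) \<and> (\<forall>t<NT. blk (q*Nx) u (Suc t) = Phi ^\<^sub>m m *\<^sub>v x t)"
      unfolding u_def S_def x_def using S_rec[OF Phim v] .
    have rec: "w2 0 = 0\<^sub>v (q*Nx) \<and> (\<forall>t<NT. w2 (Suc t) = Phic *\<^sub>v w2 t + (Phi ^\<^sub>m m - Phic) *\<^sub>v blk (q*Nx) u t)"
      unfolding w2_def E_def using E_rec[OF Phic Phim uc] .
    have w21: "w2 (Suc 0) = 0\<^sub>v (q*Nx)"
    proof -
      have "w2 (Suc 0) = Phic *\<^sub>v 0\<^sub>v (q*Nx) + (Phi ^\<^sub>m m - Phic) *\<^sub>v 0\<^sub>v (q*Nx)"
        using rec srec A(3) by auto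
      also have "\<dots> = 0\<^sub>v (q*Nx)" using mult_zero_vec[OF Phic] mult_zero_vec[OF H1] by simp
      finally show ?thesis .
    qed
    define w' where "w' t = w2 (Suc t)" for t
    have w'c: "w' t \<in> carrier_vec (q*Nx)" for t unfolding w'_def w2_def by simp
    have w's: "w' (Suc t) = Phic *\<^sub>v w' t + ((Phi ^\<^sub>m m - Phic) * Phi ^\<^sub>m m) *\<^sub>v x t" if t: "t < NT - 1" for t
    proof -
      have "w' (Suc t) = Phic *\<^sub>v w' t + (Phi ^\<^sub>m m - Phic) *\<^sub>v (Phi ^\<^sub>m m *\<^sub>v x t)"
        unfolding w'_def using rec srec t by auto
      also have "(Phi ^\<^sub>m m - Phic) *\<^sub>v (Phi ^\<^sub>m m *\<^sub>v x t) = ((Phi ^\<^sub>m m - Phic) * Phi ^\<^sub>m m) *\<^sub>v x t"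
        by (rule assoc_mult_mat_vec[OF H1 Phim, symmetric]) (simp add: x_def)
      finally show ?thesis .
    qed
    have "(\<Sum>t\<le>NT - 1. nsq (w' t)) \<le> B2^2 * (\<Sum>t<NT - 1. nsq (x t))"
      unfolding B2_def
    proof (rule core_full[OF q Nx F FF1 FF2 Phic H2 hG hH2])
      fix n assume n: "n < Nx"
      show "U n \<in> carrier_mat q q \<and> Ui n \<in> carrier_mat q q \<and> U n * Ui n = 1\<^sub>m q \<and>
        Phict n \<in> carrier_mat q q \<and> ((Phit n ^\<^sub>m m - Phict n) * Phit n ^\<^sub>m m) \<in> carrier_mat q q \<and>
        Ui n * Phict n * U n = mat_diag q (mu n) \<and>
        Ui n * ((Phit n ^\<^sub>m m - Phict n) * Phit n ^\<^sub>m m) * U n = mat_diag q (\<lambda>i. (lam n i ^ m - mu n i) * lam n i ^ m)"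
        using Uc[OF n] Uip[OF n] Pct[OF n] Hb2[OF n] dg[OF n] by auto
    qed (use w'c xc w21 w's in \<open>auto simp: w'_def\<close>)
    also have "(\<Sum>t<NT - 1. nsq (x t)) \<le> (\<Sum>t<NT+1. nsq (x t))" by (intro sum_mono2) (auto simp: nsq_nonneg)
    also have "\<dots> = nsq v" unfolding x_def using nsq_blk[of v "NT+1" "q*Nx"] v by simp
    finally have a: "(\<Sum>t\<le>NT - 1. nsq (w' t)) \<le> B2^2 * nsq v" by (simp add: mult_left_mono)
    have "nsq (E *\<^sub>v u) = (\<Sum>t<Suc NT. nsq (w2 t))" unfolding w2_def using nsq_blk[of "E *\<^sub>v u" "NT+1" "q*Nx"] Ec by simp
    also have "\<dots> = nsq (w2 0) + (\<Sum>t<NT. nsq (w' t))" unfolding w'_def by (rule sum.lessThan_Suc_shift)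
    also have "nsq (w2 0) = 0" using rec unfolding nsq_def by simp
    also have "{..<NT} = {..NT - 1}" using A(3) by auto
    finally have "nsq (E *\<^sub>v u) \<le> B2^2 * nsq v" using a by simp
    thus ?thesis unfolding ES using fin nsqv[OF vn] B2nn by blast
  qed
  have T1: "B1 = Max ((\<lambda>n. kappa (U n) * Max ((\<lambda>l. cmod (lam n l ^ m - mu n l)
             * (1 - cmod (mu n l) ^ NT) / (1 - cmod (mu n l))) ` {..<q})) ` {..<Nx})"
    unfolding B1_def kappa_def Ui_def
    by (intro arg_cong[where f = Max] image_cong refl arg_cong2[where f = "(*)"]) (simp add: geomq)
  have T2: "B2 = Max ((\<lambda>n. kappa (U n) * Max ((\<lambda>l. cmod (lam n l ^ m - mu n l) * cmod (lam n l) ^ m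
             * (1 - cmod (mu n l) ^ (NT - 1)) / (1 - cmod (mu n l))) ` {..<q})) ` {..<Nx})"
    unfolding B2_def kappa_def Ui_def
    by (intro arg_cong[where f = Max] image_cong refl arg_cong2[where f = "(*)"]) (simp add: geomq norm_mult norm_power)
  have dE: "dim_col E = ?DD" using Ec by simp
  have dES: "dim_col (E * S) = ?DD" using Sc by simp
  have s1: "spec_norm E \<le> B1" by (rule spec_norm_le) (use part1 dE in auto)
  have s2: "spec_norm (E * S) \<le> B2" by (rule spec_norm_le) (use part2 dES in auto)
  show ?thesis using s1 s2 unfolding T1 T2 E_def S_def by simp
qed

end
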